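(* For any $n\in\mathbb N^*$, any weight vector $\varpi$ for $\Gamma_n$ and any $\gamma\in\mathbb F^*$, the graph $\gamma\Gamma_n^\varpi$ has the Kahan-Poisson property.
   Context: $\mathbb F\in\{\mathbb R,\mathbb C\}$. A skew-symmetric graph is $\Gamma=(S,A)$, $S=\{1,\dots,n\}$, $A=(a_{i,j})$ skew-symmetric over $\mathbb F$. Its Poisson bracket on $\mathbb F(x)$ is $\{x_i,x_j\}=a_{i,j}x_ix_j$; its Kahan morphism (step size 1) is $K(x_i)=\tilde x_i$ with $\tilde x_i$ the unique solution of $\tilde x_i-x_i=\tilde x_i\sum_ja_{i,j}x_j+x_i\sum_ja_{i,j}\tilde x_j$; $\Gamma$ has the Kahan-Poisson property if $\{\tilde x_i,\tilde x_j\}=a_{i,j}\tilde x_i\tilde x_j$ for all $i,j$. $\Gamma_n$ has $a_{i,j}=1$ for $i<j$; $\gamma\Gamma=(S,\gamma A)$. A weight vector is $\varpi:S\to\mathbb N^*$ and the cloning $\Gamma^\varpi$ has vertices $(i,k)$, $1\le k\le\varpi(i)$, with $a^\varpi_{(i,k),(j,\ell)}=a_{i,j}$. *)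

theory Defs
  imports "HOL-Analysis.Analysis"
begin

text \<open>A skew-symmetric graph is a pair (S, A) of a finite vertex set S and a
  matrix A indexed by S. Points of F^S are functions vanishing outside S.\<close>

type_synonym ('v, 'a) sgraph = "'v set \<times> ('v \<Rightarrow> 'v \<Rightarrow> 'a)"

definition skew_graph :: "('v, 'a::ring_1) sgraph \<Rightarrow> bool" where
  "skew_graph G \<longleftrightarrow> finite (fst G) \<and>
     (\<forall>i\<in>fst G. \<forall>j\<in>fst G. snd G i j = - snd G j i)"

definition pts :: "'v set \<Rightarrow> ('v \<Rightarrow> 'a::zero) set" where
  "pts S = {x. \<forall>v. v \<notin> S \<longrightarrow> x v = 0}"

text \<open>The Kahan equations (step size 1): y is the image of x.\<close>
definition kahan_eq :: "('v, 'a::comm_ring_1) sgraph \<Rightarrow> ('v \<Rightarrow> 'a) \<Rightarrow> ('v \<Rightarrow> 'a) \<Rightarrow> bool" where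
  "kahan_eq G x y \<longleftrightarrow> (\<forall>i\<in>fst G.
     y i - x i = y i * (\<Sum>j\<in>fst G. snd G i j * x j) + x i * (\<Sum>j\<in>fst G. snd G i j * y j))"

text \<open>Points where the Kahan system has a unique solution (the domain of the
  rational Kahan map, i.e. where its common denominator does not vanish).\<close>
definition kahan_dom :: "('v, 'a::comm_ring_1) sgraph \<Rightarrow> ('v \<Rightarrow> 'a) set" where
  "kahan_dom G = {x \<in> pts (fst G). \<exists>!y. y \<in> pts (fst G) \<and> kahan_eq G x y}"

definition kahan :: "('v, 'a::comm_ring_1) sgraph \<Rightarrow> ('v \<Rightarrow> 'a) \<Rightarrow> ('v \<Rightarrow> 'a)" where
  "kahan G x = (THE y. y \<in> pts (fst G) \<and> kahan_eq G x y)"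

definition partial_deriv :: "(('v \<Rightarrow> 'a::real_normed_field) \<Rightarrow> 'a) \<Rightarrow> 'v \<Rightarrow> ('v \<Rightarrow> 'a) \<Rightarrow> 'a" where
  "partial_deriv f k x = deriv (\<lambda>t. f (x(k := t))) (x k)"

text \<open>Poisson bracket of the log-canonical structure {x_k,x_l} = a_kl x_k x_l.\<close>
definition poisson :: "('v, 'a::real_normed_field) sgraph \<Rightarrow> (('v \<Rightarrow> 'a) \<Rightarrow> 'a) \<Rightarrow> (('v \<Rightarrow> 'a) \<Rightarrow> 'a) \<Rightarrow> ('v \<Rightarrow> 'a) \<Rightarrow> 'a" where
  "poisson G f g x = (\<Sum>k\<in>fst G. \<Sum>l\<in>fst G.
      snd G k l * x k * x l * partial_deriv f k x * partial_deriv g l x)"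

definition kahan_poisson :: "('v, 'a::real_normed_field) sgraph \<Rightarrow> bool" where
  "kahan_poisson G \<longleftrightarrow> (\<forall>x\<in>kahan_dom G. \<forall>i\<in>fst G. \<forall>j\<in>fst G.
      poisson G (\<lambda>z. kahan G z i) (\<lambda>z. kahan G z j) x = snd G i j * kahan G x i * kahan G x j)"

definition Gamma_graph :: "nat \<Rightarrow> (nat, 'a::ring_1) sgraph" where
  "Gamma_graph n = ({1..n}, \<lambda>i j. if i < j then 1 else if j < i then -1 else 0)"

definition scale_graph :: "'a::ring_1 \<Rightarrow> ('v, 'a) sgraph \<Rightarrow> ('v, 'a) sgraph" where
  "scale_graph c G = (fst G, \<lambda>i j. c * snd G i j)"

definition weight_vector :: "('v, 'a) sgraph \<Rightarrow> ('v \<Rightarrow> nat) \<Rightarrow> bool" where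
  "weight_vector G w \<longleftrightarrow> (\<forall>i\<in>fst G. w i \<ge> 1)"

definition clone :: "('v, 'a) sgraph \<Rightarrow> ('v \<Rightarrow> nat) \<Rightarrow> ('v \<times> nat, 'a) sgraph" where
  "clone G w = ((SIGMA i:fst G. {1..w i}), \<lambda>p q. snd G (fst p) (fst q))"

end

theory Submission
  imports Defs
begin
definition sgm :: "nat \<Rightarrow> nat \<Rightarrow> 'a::ring_1" where
  "sgm i j = (if i < j then 1 else if j < i then -1 else 0)"

definition LL :: "(nat \<Rightarrow> 'a::comm_ring_1) \<Rightarrow> nat \<Rightarrow> 'a" where
  "LL X m = (\<Sum>j\<in>{1..<m}. X j)"

lemma sgm_swap: "sgm j i = - (sgm i j :: 'a::ring_1)"
  by (auto simp: sgm_def)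

lemma sgm_same[simp]: "sgm i i = 0" by (simp add: sgm_def)

lemma LL_Suc: "1 \<le> m \<Longrightarrow> LL X (Suc m) = LL X m + X m"
  unfolding LL_def by (simp add: sum.atLeastLessThan_Suc)

lemma LL_1[simp]: "LL X 1 = 0" "LL X 0 = 0" "LL X (Suc 0) = 0" by (simp_all add: LL_def)

lemma LL_diff: "m \<le> l \<Longrightarrow> (\<Sum>j\<in>{m..<l}. X j) = LL X l - LL X m" if "1 \<le> m"
proof -
  assume "m \<le> l"
  have "sum X {1..<m} + sum X {m..<l} = sum X {1..<l}"
    using that \<open>m\<le>l\<close> by (intro sum.atLeastLessThan_concat) auto
  then show ?thesis unfolding LL_def by (simp add: algebra_simps)
qed

lemma sum_split3: "1 \<le> i \<Longrightarrow> i < m \<Longrightarrow> sum f {1..<m} = sum f {1..<i} + f i + sum f {Suc i..<m}"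
proof -
  assume a: "1 \<le> i" "i < m"
  have "sum f {1..<m} = sum f {1..<i} + sum f {i..<m}"
    using a by (intro sum.atLeastLessThan_concat[symmetric]) auto
  also have "sum f {i..<m} = f i + sum f {Suc i..<m}"
    using a by (simp add: sum.atLeast_Suc_lessThan)
  finally show ?thesis by (simp add: add.assoc)
qed

lemma sum_sg_lt:
  fixes X :: "nat \<Rightarrow> 'a::comm_ring_1"
  assumes "1 \<le> i"
  shows "(\<Sum>j\<in>{1..<m}. sgm i j * X j) = (if m \<le> i then - LL X m else LL X m - LL X (Suc i) - LL X i)"
proof (cases "m \<le> i")
  case True
  have "(\<Sum>j\<in>{1..<m}. sgm i j * X j) = (\<Sum>j\<in>{1..<m}. - X j)"
    using True by (intro sum.cong) (auto simp: sgm_def)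
  then show ?thesis using True by (simp add: LL_def sum_negf)
next
  case False
  then have im: "i < m" by simp
  have "(\<Sum>j\<in>{1..<m}. sgm i j * X j) = (\<Sum>j\<in>{1..<i}. sgm i j * X j) + sgm i i * X i + (\<Sum>j\<in>{Suc i..<m}. sgm i j * X j)"
    by (rule sum_split3[OF assms im])
  also have "(\<Sum>j\<in>{1..<i}. sgm i j * X j) = (\<Sum>j\<in>{1..<i}. - X j)"
    by (intro sum.cong) (auto simp: sgm_def)
  also have "(\<Sum>j\<in>{Suc i..<m}. sgm i j * X j) = (\<Sum>j\<in>{Suc i..<m}. X j)"
    by (intro sum.cong) (auto simp: sgm_def)
  also have "(\<Sum>j\<in>{Suc i..<m}. X j) = LL X m - LL X (Suc i)"
    using im assms by (intro LL_diff) auto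
  finally show ?thesis using False by (simp add: LL_def sum_negf)
qed

lemma skew_sum0:
  fixes X :: "nat \<Rightarrow> 'a::field_char_0"
  shows "(\<Sum>a\<in>A. \<Sum>b\<in>A. sgm a b * X a * X b) = 0"
proof -
  let ?s = "(\<Sum>a\<in>A. \<Sum>b\<in>A. sgm a b * X a * X b)"
  have "?s = (\<Sum>b\<in>A. \<Sum>a\<in>A. sgm a b * X a * X b)" by (rule sum.swap)
  also have "\<dots> = (\<Sum>b\<in>A. \<Sum>a\<in>A. - (sgm b a * X b * X a))"
    by (intro sum.cong refl) (auto simp: sgm_def)
  also have "\<dots> = - ?s" by (simp add: sum_negf)
  finally have "2 * ?s = 0" by simp
  then show ?thesis by simp
qed

lemma skew_sum0':
  fixes X Y :: "nat \<Rightarrow> 'a::field_char_0"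
  shows "(\<Sum>a\<in>A. \<Sum>b\<in>A. sgm a b * (Y a * X b + X a * Y b)) = 0"
proof -
  have "(\<Sum>a\<in>A. \<Sum>b\<in>A. sgm a b * (Y a * X b + X a * Y b)) =
     (\<Sum>a\<in>A. \<Sum>b\<in>A. sgm a b * Y a * X b) + (\<Sum>a\<in>A. \<Sum>b\<in>A. sgm a b * X a * Y b)"
    by (simp add: sum.distrib algebra_simps)
  also have "(\<Sum>a\<in>A. \<Sum>b\<in>A. sgm a b * X a * Y b) = (\<Sum>b\<in>A. \<Sum>a\<in>A. sgm a b * X a * Y b)"
    by (rule sum.swap)
  also have "\<dots> = (\<Sum>b\<in>A. \<Sum>a\<in>A. - (sgm b a * Y b * X a))"
    by (intro sum.cong refl) (auto simp: sgm_def)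
  finally show ?thesis by (simp add: sum_negf)
qed

lemma dsum_ind:
  fixes X :: "nat \<Rightarrow> 'a::field_char_0"
  assumes "1 \<le> m" "m \<le> l"
  shows "(\<Sum>a\<in>{1..<m}. \<Sum>b\<in>{1..<l}. sgm a b * X a * X b) = LL X m * (LL X l - LL X m)"
proof -
  have "(\<Sum>a\<in>{1..<m}. \<Sum>b\<in>{1..<l}. sgm a b * X a * X b) =
    (\<Sum>a\<in>{1..<m}. (\<Sum>b\<in>{1..<m}. sgm a b * X a * X b) + (\<Sum>b\<in>{m..<l}. sgm a b * X a * X b))"
    using assms by (intro sum.cong refl sum.atLeastLessThan_concat[symmetric]) auto
  also have "\<dots> = (\<Sum>a\<in>{1..<m}. \<Sum>b\<in>{1..<m}. sgm a b * X a * X b) + (\<Sum>a\<in>{1..<m}. \<Sum>b\<in>{m..<l}. X a * X b)"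
    by (simp add: sum.distrib sgm_def)
  also have "(\<Sum>a\<in>{1..<m}. \<Sum>b\<in>{m..<l}. X a * X b) = (\<Sum>a\<in>{1..<m}. X a) * (\<Sum>b\<in>{m..<l}. X b)"
    by (simp add: sum_product)
  also have "(\<Sum>b\<in>{m..<l}. X b) = LL X l - LL X m" using assms by (simp add: LL_diff)
  also have "(\<Sum>a\<in>{1..<m}. X a) = LL X m" by (simp add: LL_def)
  also have "(\<Sum>a\<in>{1..<m}. \<Sum>b\<in>{1..<m}. sgm a b * X a * X b) = 0" by (rule skew_sum0)
  finally show ?thesis by simp
qed

locale KP =
  fixes n :: nat and w :: "nat \<Rightarrow> nat" and g :: "'a::real_normed_field"
  assumes g0: "g \<noteq> 0" and n1: "1 \<le> n" and wpos: "\<And>i. i\<in>{1..n} \<Longrightarrow> 1 \<le> w i"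
begin

abbreviation S where "S \<equiv> Sigma {1..n} (\<lambda>i. {1..w i})"
abbreviation GG where "GG \<equiv> scale_graph g (clone (Gamma_graph n) w)"

lemma GG_fst: "fst GG = S"
  by (simp add: scale_graph_def clone_def Gamma_graph_def)

lemma GG_snd: "snd GG p q = g * sgm (fst p) (fst q)"
  by (simp add: scale_graph_def clone_def Gamma_graph_def sgm_def)

lemma finS: "finite S" by auto

definition bs :: "(nat \<times> nat \<Rightarrow> 'a) \<Rightarrow> nat \<Rightarrow> 'a" where
  "bs x j = (\<Sum>k\<in>{1..w j}. x (j,k))"

definition sig :: "(nat \<Rightarrow> 'a) \<Rightarrow> nat \<Rightarrow> 'a" where
  "sig X i = (\<Sum>j\<in>{1..n}. sgm i j * X j)"

definition TT :: "(nat \<Rightarrow> 'a) \<Rightarrow> 'a" where "TT X = LL X (Suc n)"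

definition vB :: "(nat \<Rightarrow> 'a) \<Rightarrow> nat \<Rightarrow> 'a" where
  "vB X m = 1 - g * TT X + 2 * g * LL X m"

definition wB :: "(nat \<Rightarrow> 'a) \<Rightarrow> nat \<Rightarrow> 'a" where
  "wB X i = 1 - g * sig X i"

lemma sum_S: "(\<Sum>q\<in>S. f q) = (\<Sum>j\<in>{1..n}. \<Sum>k\<in>{1..w j}. f (j,k))"
  by (subst sum.Sigma) auto

lemma lin_S: "(\<Sum>q\<in>S. h (fst q) * y q) = (\<Sum>j\<in>{1..n}. h j * bs y j)"
  unfolding sum_S bs_def by (simp add: sum_distrib_left)

lemma sig_closed: "i \<in> {1..n} \<Longrightarrow> sig X i = TT X - LL X (Suc i) - LL X i"
proof -
  assume i: "i \<in> {1..n}"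
  have "sig X i = (\<Sum>j\<in>{1..<Suc n}. sgm i j * X j)"
    unfolding sig_def by (intro sum.cong) auto
  also have "\<dots> = TT X - LL X (Suc i) - LL X i"
    using i by (subst sum_sg_lt) (auto simp: TT_def)
  finally show ?thesis .
qed

lemma vB_Suc: "1 \<le> m \<Longrightarrow> vB X (Suc m) = vB X m + 2 * g * X m"
  by (simp add: vB_def LL_Suc algebra_simps)

lemma vB_1: "vB X 1 = 1 - g * TT X" "vB X (Suc 0) = 1 - g * TT X" by (simp_all add: vB_def LL_def)
lemma vB_n1: "vB X (Suc n) = 1 + g * TT X" by (simp add: vB_def TT_def)

lemma wB_closed: "i \<in> {1..n} \<Longrightarrow> 2 * wB X i = vB X i + vB X (Suc i)"
  by (simp add: wB_def sig_closed vB_def algebra_simps)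

lemma kahan_eq_iff:
  "kahan_eq GG x y \<longleftrightarrow> (\<forall>p\<in>S. y p - x p = y p * (g * sig (bs x) (fst p)) + x p * (g * sig (bs y) (fst p)))"
proof -
  have *: "(\<Sum>q\<in>S. g * sgm i (fst q) * z q) = g * sig (bs z) i" for i z
    using lin_S[of "\<lambda>j. g * sgm i j" z] by (simp add: sig_def sum_distrib_left mult.assoc)
  show ?thesis unfolding kahan_eq_def GG_fst GG_snd * ..
qed

lemma bs_sum_block: "(\<Sum>k\<in>{1..w i}. x (i,k) * c) = bs x i * c"
  by (simp add: bs_def sum_distrib_right)


definition alB :: "(nat \<Rightarrow> 'a) \<Rightarrow> nat \<Rightarrow> 'a" where
  "alB X i = (if i = 1 then 1 else vB X 1 / vB X i)"
definition beB :: "(nat \<Rightarrow> 'a) \<Rightarrow> nat \<Rightarrow> 'a" where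
  "beB X i = (if i = n then 1 else vB X (Suc n) / vB X (Suc i))"
definition PB :: "(nat \<Rightarrow> 'a) \<Rightarrow> nat \<Rightarrow> 'a" where
  "PB X i = alB X i * beB X i"
definition uB :: "(nat \<Rightarrow> 'a) \<Rightarrow> nat \<Rightarrow> 'a" where
  "uB X m = (if m = 1 then vB X (Suc n) else if m = Suc n then vB X 1 else vB X 1 * vB X (Suc n) / vB X m)"
definition DDB :: "(nat \<Rightarrow> 'a) \<Rightarrow> bool" where
  "DDB X \<longleftrightarrow> (\<forall>m\<in>{2..n}. vB X m \<noteq> 0)"

lemma P_v1: assumes "DDB X" "i \<in> {1..n}" shows "PB X i * vB X i = uB X (Suc i)"
proof -
  consider "i = 1" "n = 1" | "i = 1" "n \<noteq> 1" | "i \<noteq> 1" "i = n" | "i \<noteq> 1" "i \<noteq> n" by blast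
  then show ?thesis
  proof cases
    case 1 then show ?thesis unfolding PB_def alB_def beB_def uB_def by simp
  next
    case 2
    have "vB X 2 \<noteq> 0" using assms 2 by (auto simp: DDB_def)
    then show ?thesis using 2 assms by (auto simp: PB_def alB_def beB_def uB_def)
  next
    case 3
    have "vB X i \<noteq> 0" using assms 3 by (auto simp: DDB_def)
    then show ?thesis using 3 assms by (auto simp: PB_def alB_def beB_def uB_def)
  next
    case 4
    have "vB X i \<noteq> 0" "vB X (Suc i) \<noteq> 0" using assms 4 by (auto simp: DDB_def)
    then show ?thesis using 4 assms by (auto simp: PB_def alB_def beB_def uB_def)
  qed
qed

lemma P_v2: assumes "DDB X" "i \<in> {1..n}" shows "PB X i * vB X (Suc i) = uB X i"
proof -
  consider "i = 1" "n = 1" | "i = 1" "n \<noteq> 1" | "i \<noteq> 1" "i = n" | "i \<noteq> 1" "i \<noteq> n" by blast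
  then show ?thesis
  proof cases
    case 1 then show ?thesis unfolding PB_def alB_def beB_def uB_def by simp
  next
    case 2
    have "vB X (Suc i) \<noteq> 0" using assms 2 by (auto simp: DDB_def)
    then show ?thesis using 2 assms by (auto simp: PB_def alB_def beB_def uB_def)
  next
    case 3
    have "vB X i \<noteq> 0" using assms 3 by (auto simp: DDB_def)
    then show ?thesis using 3 assms by (auto simp: PB_def alB_def beB_def uB_def)
  next
    case 4
    have "vB X i \<noteq> 0" "vB X (Suc i) \<noteq> 0" using assms 4 by (auto simp: DDB_def)
    then show ?thesis using 4 assms by (auto simp: PB_def alB_def beB_def uB_def)
  qed
qed

lemma u_step: assumes "DDB X" "m \<in> {1..n}" shows "uB X m - uB X (Suc m) = 2 * g * X m * PB X m"
  using P_v1[OF assms] P_v2[OF assms] vB_Suc[of m X] assms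
  by (auto simp: algebra_simps)

lemma u_vB: assumes "DDB X" "m \<in> {1..Suc n}" shows "uB X m * vB X m = vB X 1 * vB X (Suc n)"
proof -
  consider "m = 1" | "m = Suc n" | "m \<noteq> 1" "m \<noteq> Suc n" by blast
  then show ?thesis
  proof cases
    case 3
    then have "vB X m \<noteq> 0" using assms by (auto simp: DDB_def)
    then show ?thesis using 3 by (simp add: uB_def)
  qed (auto simp: uB_def)
qed

lemma LLY: assumes "DDB X" "m \<in> {1..Suc n}"
  shows "2 * g * LL (\<lambda>j. X j * PB X j) m = 1 + g * TT X - uB X m"
  using assms(2)
proof (induction m)
  case 0 then show ?case by simp
next
  case (Suc m)
  show ?case
  proof (cases "m = 0")
    case True then show ?thesis by (simp add: uB_def vB_n1)
  next
    case False
    then have m: "m \<in> {1..n}" "m \<in> {1..Suc n}" using Suc.prems by auto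
    have "2 * g * LL (\<lambda>j. X j * PB X j) (Suc m) = 2 * g * LL (\<lambda>j. X j * PB X j) m + 2 * g * X m * PB X m"
      using m by (simp add: LL_Suc algebra_simps)
    also have "\<dots> = 1 + g * TT X - uB X (Suc m)"
      using Suc.IH[OF m(2)] u_step[OF assms(1) m(1)] by (simp add: algebra_simps)
    finally show ?thesis .
  qed
qed

lemma LLY': assumes "DDB X" "m \<in> {1..Suc n}"
  shows "uB X m = 1 + g * TT X - 2 * g * LL (\<lambda>j. X j * PB X j) m"
  using LLY[OF assms] by (simp add: algebra_simps)

lemma TTY: assumes "DDB X" shows "TT (\<lambda>j. X j * PB X j) = TT X"
proof -
  have "2 * g * TT (\<lambda>j. X j * PB X j) = 1 + g * TT X - uB X (Suc n)"
    using LLY[OF assms, of "Suc n"] by (simp add: TT_def)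
  also have "\<dots> = 2 * g * TT X" using n1 by (simp add: uB_def vB_1)
  finally show ?thesis using g0 by simp
qed

lemma block_sol: assumes "DDB X" "i \<in> {1..n}"
  shows "PB X i * wB X i = 1 + g * sig (\<lambda>j. X j * PB X j) i"
proof -
  let ?Y = "\<lambda>j. X j * PB X j"
  have i1: "i \<in> {1..Suc n}" "Suc i \<in> {1..Suc n}" using assms by auto
  have "2 * (1 + g * sig ?Y i) = 2 + 2 * g * TT X - 2 * g * LL ?Y (Suc i) - 2 * g * LL ?Y i"
    using assms TTY[OF assms(1)] by (simp add: sig_closed algebra_simps)
  also have "\<dots> = uB X i + uB X (Suc i)"
    unfolding LLY'[OF assms(1) i1(1)] LLY'[OF assms(1) i1(2)] by (simp add: algebra_simps)
  also have "\<dots> = PB X i * (2 * wB X i)"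
    using P_v1[OF assms] P_v2[OF assms] wB_closed[OF assms(2), of X] by (simp add: algebra_simps)
  finally have "2 * (PB X i * wB X i) = 2 * (1 + g * sig ?Y i)" by (simp add: algebra_simps)
  then show ?thesis by (metis mult_left_cancel zero_neq_numeral)
qed

end

context KP begin

definition FF :: "(nat \<times> nat \<Rightarrow> 'a) \<Rightarrow> nat \<times> nat \<Rightarrow> 'a" where
  "FF x p = (if p \<in> S then x p * PB (bs x) (fst p) else 0)"

definition DD :: "(nat \<times> nat \<Rightarrow> 'a) \<Rightarrow> bool" where
  "DD x \<longleftrightarrow> DDB (bs x) \<and> (\<forall>i\<in>{1..n}. 2 \<le> w i \<longrightarrow> wB (bs x) i \<noteq> 0)"

lemma bs_FF: "j \<in> {1..n} \<Longrightarrow> bs (FF x) j = bs x j * PB (bs x) j"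
  unfolding bs_def FF_def by (simp add: sum_distrib_right)

lemma sig_cong: "(\<And>j. j \<in> {1..n} \<Longrightarrow> X j = Y j) \<Longrightarrow> sig X i = sig Y i"
  unfolding sig_def by (intro sum.cong) auto

lemma TT_sum: "TT X = (\<Sum>j\<in>{1..n}. X j)"
  unfolding TT_def LL_def by (intro sum.cong) auto

lemma FF_pts: "FF x \<in> pts S"
  unfolding pts_def FF_def by auto

lemma FF_sol: assumes "DDB (bs x)" shows "kahan_eq GG x (FF x)"
  unfolding kahan_eq_iff
proof
  fix p assume p: "p \<in> S"
  then obtain i k where pik: "p = (i,k)" "i \<in> {1..n}" by auto
  let ?X = "bs x"
  have sY: "sig (bs (FF x)) i = sig (\<lambda>j. ?X j * PB ?X j) i"
    by (intro sig_cong) (simp add: bs_FF)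
  have bl: "PB ?X i * wB ?X i = 1 + g * sig (\<lambda>j. ?X j * PB ?X j) i"
    by (rule block_sol[OF assms pik(2)])
  have FFp: "FF x p = x p * PB ?X i" using p pik by (simp add: FF_def)
  have e: "x p * PB ?X i - x p - (x p * PB ?X i * (g * sig ?X i) + x p * (g * sig (\<lambda>j. ?X j * PB ?X j) i))
      = x p * (PB ?X i * wB ?X i - (1 + g * sig (\<lambda>j. ?X j * PB ?X j) i))"
    by (simp add: wB_def algebra_simps)
  have "x p * PB ?X i - x p = x p * PB ?X i * (g * sig ?X i) + x p * (g * sig (\<lambda>j. ?X j * PB ?X j) i)"
    using e bl by simp
  then show "FF x p - x p = FF x p * (g * sig (bs x) (fst p)) + x p * (g * sig (bs (FF x)) (fst p))"
    unfolding FFp using pik sY by simp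
qed

lemma uniq: assumes D: "DD x" and y: "y \<in> pts S" and ke: "kahan_eq GG x y"
  shows "y = FF x"
proof -
  define X where "X = bs x"
  define Y where "Y = bs y"
  have DB: "DDB X" using D by (simp add: DD_def X_def)
  have veq: "\<And>p. p \<in> S \<Longrightarrow> y p - x p = y p * (g * sig X (fst p)) + x p * (g * sig Y (fst p))"
    using ke unfolding kahan_eq_iff X_def Y_def by blast
  have blk: "Y i - X i = Y i * (g * sig X i) + X i * (g * sig Y i)" if i: "i \<in> {1..n}" for i
  proof -
    have "Y i - X i = (\<Sum>k\<in>{1..w i}. y (i,k) - x (i,k))"
      by (simp add: Y_def X_def bs_def sum_subtractf)
    also have "\<dots> = (\<Sum>k\<in>{1..w i}. y (i,k) * (g * sig X i) + x (i,k) * (g * sig Y i))"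
      using i by (intro sum.cong refl) (simp add: veq)
    also have "\<dots> = Y i * (g * sig X i) + X i * (g * sig Y i)"
      by (simp add: Y_def X_def bs_def sum.distrib sum_distrib_right)
    finally show ?thesis .
  qed
  have tot: "TT Y = TT X"
  proof -
    have "TT Y - TT X = (\<Sum>i\<in>{1..n}. Y i - X i)" by (simp add: TT_sum sum_subtractf)
    also have "\<dots> = (\<Sum>i\<in>{1..n}. Y i * (g * sig X i) + X i * (g * sig Y i))"
      by (intro sum.cong refl) (simp add: blk)
    also have "\<dots> = g * (\<Sum>i\<in>{1..n}. \<Sum>j\<in>{1..n}. sgm i j * (Y i * X j + X i * Y j))"
      by (simp add: sig_def sum_distrib_left sum.distrib algebra_simps)
    also have "\<dots> = 0" by (simp add: skew_sum0')
    finally show ?thesis by simp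
  qed
  define u' where "u' m = 1 + g * TT X - 2 * g * LL Y m" for m
  have rec: "Y i * vB X (Suc i) = X i * u' i" if i: "i \<in> {1..n}" for i
  proof -
    have b: "Y i - X i = Y i * (g * sig X i) + X i * (g * sig Y i)" by (rule blk[OF i])
    have e: "(Y i * vB X (Suc i) - X i * u' i) = (Y i - X i) - (Y i * (g * sig X i) + X i * (g * sig Y i))"
      using i tot by (simp add: u'_def vB_def LL_Suc sig_closed algebra_simps)
    show ?thesis using b e by simp
  qed
  have ind: "u' m = uB X m" if m: "m \<in> {1..n}" for m
    using m
  proof (induction m)
    case 0 then show ?case by simp
  next
    case (Suc m)
    show ?case
    proof (cases "m = 0")
      case True then show ?thesis by (simp add: u'_def uB_def vB_n1)
    next
      case False
      then have m: "m \<in> {1..n}" "m \<in> {1..Suc n}" using Suc.prems by auto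
      have IH: "u' m = uB X m" using Suc.IH m by simp
      have nz: "vB X (Suc m) \<noteq> 0" using DB Suc.prems False by (auto simp: DDB_def)
      have r: "Y m * vB X (Suc m) = X m * uB X m" using rec[OF m(1)] IH by simp
      have uv: "uB X m * vB X m = vB X 1 * vB X (Suc n)" by (rule u_vB[OF DB m(2)])
      have "u' (Suc m) * vB X (Suc m) = u' m * vB X (Suc m) - 2 * g * (Y m * vB X (Suc m))"
        using m by (simp add: u'_def LL_Suc algebra_simps)
      also have "\<dots> = uB X m * vB X m"
        using IH r vB_Suc[of m X] m by (simp add: algebra_simps)
      finally have "u' (Suc m) * vB X (Suc m) = vB X 1 * vB X (Suc n)" using uv by simp
      then have "u' (Suc m) = vB X 1 * vB X (Suc n) / vB X (Suc m)"
        using nz by (simp add: field_simps)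
      then show ?thesis using Suc.prems False by (simp add: uB_def)
    qed
  qed
  have ind': "u' m = uB X m" if m: "m \<in> {1..Suc n}" for m
  proof (cases "m = Suc n")
    case True
    then show ?thesis using tot n1 by (simp add: u'_def uB_def vB_1 TT_def[symmetric] algebra_simps)
  next
    case False then show ?thesis using m ind by auto
  qed
  have Ym: "Y m = X m * PB X m" if m: "m \<in> {1..n}" for m
  proof -
    have "2 * g * Y m = u' m - u' (Suc m)" using m by (simp add: u'_def LL_Suc algebra_simps)
    also have "\<dots> = uB X m - uB X (Suc m)" using m by (simp add: ind')
    also have "\<dots> = 2 * g * (X m * PB X m)" using u_step[OF DB m] by (simp add: algebra_simps)
    finally show ?thesis using g0 by simp
  qed
  show ?thesis
  proof
    fix p
    show "y p = FF x p"
    proof (cases "p \<in> S")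
      case False then show ?thesis using y by (cases p) (auto simp: pts_def FF_def)
    next
      case True
      then obtain i k where pik: "p = (i,k)" "i \<in> {1..n}" "k \<in> {1..w i}" by auto
      have sY: "sig Y i = sig (\<lambda>j. X j * PB X j) i" by (intro sig_cong) (simp add: Ym)
      have bl: "PB X i * wB X i = 1 + g * sig (\<lambda>j. X j * PB X j) i"
        by (rule block_sol[OF DB pik(2)])
      have "y p * wB X i = x p * (1 + g * sig Y i)"
        using veq[OF True] pik by (simp add: wB_def algebra_simps)
      also have "\<dots> = x p * PB X i * wB X i" using sY bl by simp
      finally have yw: "y p * wB X i = x p * PB X i * wB X i" .
      show ?thesis
      proof (cases "wB X i = 0")
        case False
        then show ?thesis using yw True pik by (simp add: FF_def X_def)
      next
        case z: True
        then have "w i = 1" using D pik wpos[of i] by (force simp: DD_def X_def)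
        then have k1: "k = 1" using pik by auto
        have "Y i = y p" "X i = x p" using \<open>w i = 1\<close> pik k1 by (simp_all add: Y_def X_def bs_def)
        then show ?thesis using Ym[OF pik(2)] True pik by (simp add: FF_def X_def)
      qed
    qed
  qed
qed

lemma kahan_FF: assumes "x \<in> pts S" "DD x"
  shows "x \<in> kahan_dom GG" "kahan GG x = FF x"
proof -
  have ex: "\<exists>!y. y \<in> pts (fst GG) \<and> kahan_eq GG x y"
  proof (rule ex1I[of _ "FF x"])
    show "FF x \<in> pts (fst GG) \<and> kahan_eq GG x (FF x)"
      using FF_pts FF_sol assms by (auto simp: GG_fst DD_def)
    show "\<And>y. y \<in> pts (fst GG) \<and> kahan_eq GG x y \<Longrightarrow> y = FF x"
      using uniq assms by (auto simp: GG_fst)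
  qed
  then show "x \<in> kahan_dom GG" using assms by (simp add: kahan_dom_def GG_fst)
  show "kahan GG x = FF x"
    unfolding kahan_def
    using FF_pts FF_sol uniq assms by (intro the_equality) (auto simp: GG_fst DD_def)
qed

end

context KP begin

lemma fwd_ker:
  fixes X :: "nat \<Rightarrow> 'a"
  assumes vn: "vB X (Suc n) \<noteq> 0" and m: "m \<in> {2..n}" and vm: "vB X m = 0"
  shows "\<exists>Z. (\<exists>i\<in>{1..n}. Z i \<noteq> 0) \<and> (\<forall>i\<in>{1..n}. Z i * wB X i = X i * (g * sig Z i))"
proof -
  define A where "A = {m \<in> {2..n}. vB X m = 0}"
  have finA: "finite A" and neA: "A \<noteq> {}" using m vm by (auto simp: A_def)
  define M where "M = Max A"
  have MA: "M \<in> A" using finA neA by (simp add: M_def)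
  then have M2: "2 \<le> M" "M \<le> n" and vM: "vB X M = 0" by (auto simp: A_def)
  have big: "vB X j \<noteq> 0" if "M < j" "j \<le> Suc n" for j
  proof (cases "j = Suc n")
    case True then show ?thesis using vn by simp
  next
    case False
    show ?thesis
    proof
      assume "vB X j = 0"
      then have "j \<in> A" using that False M2 by (auto simp: A_def)
      then have "j \<le> M" using finA by (simp add: M_def)
      then show False using that by simp
    qed
  qed
  define zf where "zf i l = (if i < M - 1 then 0 else if i = M - 1 then 1 else - 2 * g * X i * l / vB X (Suc i))" for i l
  define lf where "lf = rec_nat 0 (\<lambda>i l. l + zf i l)"
  have lf0: "lf 0 = 0" and lfS: "lf (Suc i) = lf i + zf i (lf i)" for i by (simp_all add: lf_def)
  define Z where "Z i = zf i (lf i)" for i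
 have lfZ: "lf (Suc i) = lf i + Z i" for i by (simp add: lfS Z_def)
  have Z0: "Z 0 = 0" using M2 by (simp add: Z_def zf_def)
  have lf_sum: "lf i = sum Z {0..<i}" for i
    by (induction i) (simp_all add: lf0 lfS Z_def)
  have LLZ: "LL Z i = lf i" for i
  proof (cases i)
    case 0 then show ?thesis by (simp add: lf0)
  next
    case (Suc k)
    have "sum Z {0..<i} = Z 0 + sum Z {1..<i}" using Suc by (simp add: sum.atLeast_Suc_lessThan)
    then show ?thesis by (simp add: lf_sum LL_def Z0)
  qed
  have lf_small: "lf i = 0" if "i \<le> M - 1" for i
    using that
  proof (induction i)
    case 0 then show ?case by (simp add: lf0)
  next
    case (Suc i) then show ?case by (simp add: lfS zf_def)
  qed
  have key: "Z i * vB X (Suc i) = - 2 * g * X i * lf i" if i: "i \<in> {1..n}" for i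
  proof -
    consider "i < M - 1" | "i = M - 1" | "M - 1 < i" by linarith
    then show ?thesis
    proof cases
      case 1 then show ?thesis using lf_small[of i] by (simp add: Z_def zf_def)
    next
      case 2
      then have "Suc i = M" using M2 by simp
      then show ?thesis using lf_small[of i] 2 vM by (simp add: Z_def zf_def)
    next
      case 3
      then have "vB X (Suc i) \<noteq> 0" using big[of "Suc i"] i M2 by simp
      then show ?thesis using 3 by (simp add: Z_def zf_def)
    qed
  qed
  have inv: "lf j * vB X j = 0" if "M \<le> j" "j \<le> Suc n" for j
    using that
  proof (induction j rule: dec_induct)
    case base then show ?case using vM by simp
  next
    case (step j)
    have j: "j \<in> {1..n}" using step M2 by auto
    have "lf (Suc j) * vB X (Suc j) = lf j * vB X (Suc j) + Z j * vB X (Suc j)"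
      by (simp add: lfS Z_def algebra_simps)
    also have "\<dots> = lf j * (vB X (Suc j) - 2 * g * X j)" using key[OF j] by (simp add: algebra_simps)
    also have "\<dots> = lf j * vB X j" using vB_Suc[of j X] j by simp
    finally show ?case using step by simp
  qed
  have TZ: "TT Z = 0"
  proof -
    have "lf (Suc n) * vB X (Suc n) = 0" using inv M2 by simp
    then show ?thesis using vn LLZ by (simp add: TT_def)
  qed
  have eq: "Z i * wB X i = X i * (g * sig Z i)" if i: "i \<in> {1..n}" for i
  proof -
    have a: "LL Z (Suc i) = lf i + Z i" using LLZ[of "Suc i"] lfZ[of i] by (rule trans)
    have b: "LL Z i = lf i" by (rule LLZ)
    have s0: "sig Z i = TT Z - LL Z (Suc i) - LL Z i" by (rule sig_closed[OF i])
    have s: "sig Z i = - 2 * lf i - Z i" unfolding s0 a b TZ by (simp add: algebra_simps)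
    have w1: "wB X i = vB X (Suc i) - g * X i"
      using i by (simp add: wB_def vB_def sig_closed LL_Suc algebra_simps)
    have "Z i * wB X i - X i * (g * sig Z i) = Z i * vB X (Suc i) + 2 * g * X i * lf i"
      unfolding w1 s by (simp add: algebra_simps)
    also have "\<dots> = 0" using key[OF i] by simp
    finally show ?thesis by simp
  qed
  have Z1: "Z (M - 1) = 1" using lf_small[of "M - 1"] by (simp add: Z_def zf_def)
  have M1: "M - 1 \<in> {1..n}" using M2 by auto
  have Zn: "\<exists>i\<in>{1..n}. Z i \<noteq> 0" using Z1 M1 by (intro bexI[of _ "M - 1"]) auto
  have eq': "\<forall>i\<in>{1..n}. Z i * wB X i = X i * (g * sig Z i)" using eq by blast
  show ?thesis using Zn eq' by blast
qed

end

lemma LL_rev: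
  fixes X :: "nat \<Rightarrow> 'a::comm_ring_1"
  assumes "1 \<le> m" "m \<le> Suc n"
  shows "LL (\<lambda>i. X (Suc n - i)) m = LL X (Suc n) - LL X (Suc (Suc n) - m)"
  using assms
proof (induction m rule: dec_induct)
  case base then show ?case by simp
next
  case (step m)
  have e: "Suc (Suc n) - m = Suc (Suc n - m)" using step by simp
  have "LL (\<lambda>i. X (Suc n - i)) (Suc m) = LL (\<lambda>i. X (Suc n - i)) m + X (Suc n - m)"
    using step by (simp add: LL_Suc)
  also have "\<dots> = LL X (Suc n) - LL X (Suc (Suc n) - Suc m)"
    using step e by (simp add: LL_Suc)
  finally show ?case .
qed

lemma sig_rev_aux:
  fixes Z :: "nat \<Rightarrow> 'a::comm_ring_1"
  assumes i: "i \<in> {1..n}"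
  shows "(\<Sum>j\<in>{1..n}. sgm i j * Z (Suc n - j)) = - (\<Sum>j\<in>{1..n}. sgm (Suc n - i) j * Z j)"
proof -
  have "(\<Sum>j\<in>{1..n}. sgm (Suc n - i) j * Z j) = (\<Sum>j\<in>{1..n}. sgm (Suc n - i) (n + 1 - j) * Z (n + 1 - j))"
    by (rule sum.atLeastAtMost_rev)
  also have "\<dots> = (\<Sum>j\<in>{1..n}. - (sgm i j * Z (Suc n - j)))"
    using i by (intro sum.cong refl) (auto simp: sgm_def)
  finally show ?thesis by (simp add: sum_negf)
qed

context KP begin

lemma block_ker:
  fixes X :: "nat \<Rightarrow> 'a"
  assumes m: "m \<in> {2..n}" and vm: "vB X m = 0"
  shows "\<exists>Z. (\<exists>i\<in>{1..n}. Z i \<noteq> 0) \<and> (\<forall>i\<in>{1..n}. Z i * wB X i = X i * (g * sig Z i))"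
proof (cases "vB X (Suc n) = 0")
  case False then show ?thesis using fwd_ker[OF False m vm] by blast
next
  case True
  interpret R: KP n w "-g" by unfold_locales (use g0 n1 wpos in auto)
  define Xr where "Xr i = X (Suc n - i)" for i
  have TTr: "TT Xr = TT X"
    unfolding TT_sum Xr_def using sum.atLeastAtMost_rev[of X 1 n] by simp
  have vr: "R.vB Xr j = vB X (Suc (Suc n) - j)" if "1 \<le> j" "j \<le> Suc n" for j
  proof -
    have l: "LL Xr j = LL X (Suc n) - LL X (Suc (Suc n) - j)" using LL_rev[OF that, of X] unfolding Xr_def[abs_def] by simp
    show ?thesis unfolding R.vB_def vB_def l TTr by (simp add: TT_def algebra_simps)
  qed
  have sr: "sig (\<lambda>j. Z (Suc n - j)) i = - sig Z (Suc n - i)" if "i \<in> {1..n}" for Z i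
    using sig_rev_aux[OF that, of Z] by (simp add: sig_def)
  have "vB X 1 + vB X (Suc n) = 2" by (simp add: vB_1 vB_n1)
  then have v1: "R.vB Xr (Suc n) \<noteq> 0" using True vr[of "Suc n"] by simp
  have m': "Suc (Suc n) - m \<in> {2..n}" using m by auto
  have vm': "R.vB Xr (Suc (Suc n) - m) = 0" using vr[of "Suc (Suc n) - m"] m vm by auto
  obtain Zr where Zr: "\<exists>i\<in>{1..n}. Zr i \<noteq> 0" "\<forall>i\<in>{1..n}. Zr i * R.wB Xr i = Xr i * (- g * sig Zr i)"
    using R.fwd_ker[OF v1 m' vm'] by auto
  define Z where "Z j = Zr (Suc n - j)" for j
  have ZZ: "Zr i = Z (Suc n - i)" if "i \<in> {1..n}" for i using that by (simp add: Z_def)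
  have sZ: "sig Zr i = - sig Z (Suc n - i)" if "i \<in> {1..n}" for i
  proof -
    have "sig Zr i = sig (\<lambda>j. Z (Suc n - j)) i" by (intro sig_cong) (simp add: ZZ)
    then show ?thesis using sr[OF that] by simp
  qed
  have wr: "R.wB Xr i = wB X (Suc n - i)" if "i \<in> {1..n}" for i
  proof -
    have "sig Xr i = - sig X (Suc n - i)" using sr[OF that, of X] unfolding Xr_def[abs_def] by simp
    then show ?thesis by (simp add: R.wB_def wB_def)
  qed
  show ?thesis
  proof (intro exI conjI)
    obtain i where i: "i \<in> {1..n}" "Zr i \<noteq> 0" using Zr(1) by auto
    then show "\<exists>i\<in>{1..n}. Z i \<noteq> 0" using ZZ[OF i(1)] by (intro bexI[of _ "Suc n - i"]) auto
    show "\<forall>i\<in>{1..n}. Z i * wB X i = X i * (g * sig Z i)"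
    proof
      fix j assume j: "j \<in> {1..n}"
      define i where "i = Suc n - j"
      have i: "i \<in> {1..n}" "Suc n - i = j" using j by (auto simp: i_def)
      have "Zr i * R.wB Xr i = Xr i * (- g * sig Zr i)" using Zr(2) i by blast
      then show "Z j * wB X j = X j * (g * sig Z j)"
        using ZZ[OF i(1)] wr[OF i(1)] sZ[OF i(1)] i by (simp add: Xr_def)
    qed
  qed
qed

end

context KP begin

lemma sig_add: "sig (\<lambda>j. X j + Y j) i = sig X i + sig Y i"
  unfolding sig_def by (simp add: sum.distrib algebra_simps)

lemma bs_add: "bs (\<lambda>p. y p + z p) j = bs y j + bs z j"
  unfolding bs_def by (simp add: sum.distrib)

lemma not_dom:
  assumes x: "x \<in> kahan_dom GG" and z: "z \<in> pts S" and p0: "p0 \<in> S" "z p0 \<noteq> 0"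
    and hom: "\<forall>p\<in>S. z p = z p * (g * sig (bs x) (fst p)) + x p * (g * sig (bs z) (fst p))"
  shows False
proof -
  from x have ex: "\<exists>!y. y \<in> pts S \<and> kahan_eq GG x y" by (simp add: kahan_dom_def GG_fst)
  then obtain y where y: "y \<in> pts S" "kahan_eq GG x y" by blast
  define y' where "y' = (\<lambda>p. y p + z p)"
  have y'p: "y' \<in> pts S" using y(1) z by (simp add: pts_def y'_def)
  have "kahan_eq GG x y'"
    unfolding kahan_eq_iff
  proof
    fix p assume p: "p \<in> S"
    have a: "y p - x p = y p * (g * sig (bs x) (fst p)) + x p * (g * sig (bs y) (fst p))"
      using y(2) p unfolding kahan_eq_iff by blast
    have sy: "sig (bs y') (fst p) = sig (bs y) (fst p) + sig (bs z) (fst p)"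
      unfolding y'_def bs_add sig_add ..
    show "y' p - x p = y' p * (g * sig (bs x) (fst p)) + x p * (g * sig (bs y') (fst p))"
    proof -
      have h: "z p = z p * (g * sig (bs x) (fst p)) + x p * (g * sig (bs z) (fst p))" using hom p by blast
      show ?thesis using a h sy unfolding y'_def by (simp add: algebra_simps)
    qed
  qed
  then have "y' = y" using ex y y'p by blast
  then have "z p0 = 0" unfolding y'_def by (metis add_cancel_left_right)
  then show False using p0 by simp
qed

lemma dom_w: assumes x: "x \<in> kahan_dom GG" and i: "i \<in> {1..n}" and w2: "2 \<le> w i"
  shows "wB (bs x) i \<noteq> 0"
proof
  assume wz: "wB (bs x) i = 0"
  define z where "z p = (if p = (i,1::nat) then 1 else if p = (i,2) then -1 else (0::'a))" for p :: "nat \<times> nat"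
  have S12: "(i,1) \<in> S" "(i,2) \<in> S" using i w2 by auto
  have zp: "z \<in> pts S" using S12 by (auto simp: pts_def z_def)
  have bz: "bs z j = 0" for j
  proof (cases "j = i")
    case False then show ?thesis by (simp add: bs_def z_def)
  next
    case True
    have "bs z j = (\<Sum>k\<in>{1..w i}. (if k = 1 then 1 else 0) - (if k = 2 then 1 else 0))"
      unfolding bs_def z_def True by (intro sum.cong refl) auto
    also have "\<dots> = 0" using w2 by (simp add: sum_subtractf)
    finally show ?thesis .
  qed
  have sz: "sig (bs z) k = 0" for k by (simp add: sig_def bz)
  have hom: "\<forall>p\<in>S. z p = z p * (g * sig (bs x) (fst p)) + x p * (g * sig (bs z) (fst p))"
  proof
    fix p assume p: "p \<in> S"
    show "z p = z p * (g * sig (bs x) (fst p)) + x p * (g * sig (bs z) (fst p))"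
    proof (cases "fst p = i")
      case True
      have "z p * wB (bs x) i = 0" using wz by simp
      then show ?thesis using True by (simp add: sz wB_def algebra_simps)
    next
      case False
      then have "z p = 0" by (auto simp: z_def)
      then show ?thesis by (simp add: sz)
    qed
  qed
  show False using not_dom[OF x zp S12(1) _ hom] by (simp add: z_def)
qed

lemma dom_v: assumes x: "x \<in> kahan_dom GG" and wnz: "\<forall>i\<in>{1..n}. 2 \<le> w i \<longrightarrow> wB (bs x) i \<noteq> 0"
  and m: "m \<in> {2..n}" shows "vB (bs x) m \<noteq> 0"
proof
  assume vz: "vB (bs x) m = 0"
  define X where "X = bs x"
  obtain Z where Zn: "\<exists>i\<in>{1..n}. Z i \<noteq> 0" and Zeq: "\<forall>i\<in>{1..n}. Z i * wB X i = X i * (g * sig Z i)"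
    using block_ker[OF m vz] unfolding X_def by blast
  define z where "z p = (if p \<in> S then (if 2 \<le> w (fst p) then x p * (g * sig Z (fst p)) / wB X (fst p) else Z (fst p)) else 0)" for p
  have zp: "z \<in> pts S" by (auto simp: pts_def z_def)
  have bz: "bs z i = Z i" if i: "i \<in> {1..n}" for i
  proof (cases "2 \<le> w i")
    case True
    have wn: "wB X i \<noteq> 0" using wnz i True by (simp add: X_def)
    have "bs z i = (\<Sum>k\<in>{1..w i}. x (i,k) * (g * sig Z i / wB X i))"
      unfolding bs_def z_def using i True by (intro sum.cong refl) auto
    also have "\<dots> = X i * (g * sig Z i / wB X i)" unfolding X_def by (rule bs_sum_block)
    also have "\<dots> = X i * (g * sig Z i) / wB X i" by simp
    also have "\<dots> = Z i" using Zeq i wn by (metis nonzero_mult_div_cancel_right)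
    finally show ?thesis .
  next
    case False
    then have "w i = 1" using wpos[OF i] by simp
    then show ?thesis using i False by (simp add: bs_def z_def)
  qed
  have sz: "sig (bs z) k = sig Z k" for k by (intro sig_cong) (simp add: bz)
  have hom: "\<forall>p\<in>S. z p = z p * (g * sig (bs x) (fst p)) + x p * (g * sig (bs z) (fst p))"
  proof
    fix p assume p: "p \<in> S"
    then obtain i k where pik: "p = (i,k)" "i \<in> {1..n}" "k \<in> {1..w i}" by auto
    show "z p = z p * (g * sig (bs x) (fst p)) + x p * (g * sig (bs z) (fst p))"
    proof (cases "2 \<le> w i")
      case True
      have wn: "wB X i \<noteq> 0" using wnz pik True by (simp add: X_def)
      have zv: "z p = x p * (g * sig Z i) / wB X i" using p pik True by (simp add: z_def)
      have "z p * wB X i = x p * (g * sig Z i)" using zv wn by simp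
      then show ?thesis using pik by (simp add: sz wB_def X_def algebra_simps)
    next
      case False
      then have "w i = 1" using wpos[OF pik(2)] by simp
      then have k1: "k = 1" using pik by simp
      have "x p = X i" using pik k1 \<open>w i = 1\<close> by (simp add: X_def bs_def)
      moreover have "z p = Z i" using p pik False by (simp add: z_def)
      moreover have "Z i * wB X i = X i * (g * sig Z i)" using Zeq pik by blast
      ultimately show ?thesis using pik by (simp add: sz wB_def X_def algebra_simps)
    qed
  qed
  obtain i where i: "i \<in> {1..n}" "Z i \<noteq> 0" using Zn by blast
  then have "bs z i \<noteq> 0" using bz by simp
  then obtain k where k: "k \<in> {1..w i}" "z (i,k) \<noteq> 0" unfolding bs_def by (meson sum.neutral)
  have "(i,k) \<in> S" using i k by auto
  then show False using not_dom[OF x zp _ k(2) hom] by simp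
qed

lemma dom_DD: assumes x: "x \<in> kahan_dom GG" shows "DD x"
proof -
  have w: "\<forall>i\<in>{1..n}. 2 \<le> w i \<longrightarrow> wB (bs x) i \<noteq> 0" using dom_w[OF x] by blast
  have "DDB (bs x)" unfolding DDB_def using dom_v[OF x w] by blast
  then show ?thesis using w by (simp add: DD_def)
qed

lemma kahan_dom_FF: assumes x: "x \<in> kahan_dom GG" shows "kahan GG x = FF x" "x \<in> pts S"
proof -
  show xp: "x \<in> pts S" using x by (simp add: kahan_dom_def GG_fst)
  show "kahan GG x = FF x" using kahan_FF(2)[OF xp dom_DD[OF x]] .
qed

end

lemma aff_deriv:
  fixes A a t0 :: "'a::real_normed_field"
  shows "((\<lambda>t. A + a * (t - t0)) has_field_derivative a) (at t0)"
proof -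
  show ?thesis by (auto intro!: derivative_eq_intros)
qed

lemma quot_aff_deriv:
  fixes A a B b t0 :: "'a::real_normed_field"
  assumes "B \<noteq> 0"
  shows "((\<lambda>t. (A + a * (t - t0)) / (B + b * (t - t0))) has_field_derivative (a - (A / B) * b) / B) (at t0)"
proof -
  have "((\<lambda>t. (A + a * (t - t0)) / (B + b * (t - t0))) has_field_derivative
      (a * (B + b * (t0 - t0)) - (A + a * (t0 - t0)) * b) / ((B + b * (t0 - t0)) * (B + b * (t0 - t0)))) (at t0)"
    by (rule DERIV_divide[OF aff_deriv aff_deriv]) (simp add: assms)
  moreover have "(a * (B + b * (t0 - t0)) - (A + a * (t0 - t0)) * b) / ((B + b * (t0 - t0)) * (B + b * (t0 - t0)))
      = (a - (A / B) * b) / B" using assms by (simp add: field_simps)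
  ultimately show ?thesis by simp
qed

lemma aff_ev_ne:
  fixes A a t0 :: "'a::real_normed_field"
  assumes "A \<noteq> 0"
  shows "eventually (\<lambda>t. A + a * (t - t0) \<noteq> 0) (nhds t0)"
proof -
  have "((\<lambda>t. A + a * (t - t0)) \<longlongrightarrow> A + a * (t0 - t0)) (nhds t0)"
    by (intro tendsto_intros filterlim_ident)
  then have "((\<lambda>t. A + a * (t - t0)) \<longlongrightarrow> A) (nhds t0)" by simp
  then show ?thesis using assms by (rule tendsto_imp_eventually_ne)
qed

context KP begin

definition gv :: "nat \<Rightarrow> nat \<times> nat \<Rightarrow> 'a" where
  "gv m k = g * (if fst k < m then 1 else -1)"

definition Gr :: "(nat \<times> nat \<Rightarrow> 'a) \<Rightarrow> nat \<times> nat \<Rightarrow> nat \<times> nat \<Rightarrow> 'a" where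
  "Gr x p k = (if k = p then PB (bs x) (fst p) else 0) +
     x p * (beB (bs x) (fst p) * (gv 1 k - alB (bs x) (fst p) * gv (fst p) k) / vB (bs x) (fst p)
          + alB (bs x) (fst p) * (gv (Suc n) k - beB (bs x) (fst p) * gv (Suc (fst p)) k) / vB (bs x) (Suc (fst p)))"

lemma bs_upd: assumes k: "k \<in> S" shows "bs (x(k:=t)) j = bs x j + (if j = fst k then t - x k else 0)"
proof -
  obtain i l where kil: "k = (i,l)" "i \<in> {1..n}" "l \<in> {1..w i}" using k by auto
  have "bs (x(k:=t)) j = (\<Sum>l'\<in>{1..w j}. x (j,l') + (if j = i \<and> l' = l then t - x k else 0))"
    unfolding bs_def by (intro sum.cong refl) (auto simp: kil)
  also have "\<dots> = bs x j + (\<Sum>l'\<in>{1..w j}. if j = i \<and> l' = l then t - x k else 0)"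
    by (simp add: sum.distrib bs_def)
  also have "(\<Sum>l'\<in>{1..w j}. if j = i \<and> l' = l then t - x k else 0) = (if j = fst k then t - x k else 0)"
    using kil by (cases "j = i") auto
  finally show ?thesis .
qed

lemma LL_upd: assumes k: "k \<in> S" shows "LL (bs (x(k:=t))) m = LL (bs x) m + (if fst k < m then t - x k else 0)"
proof -
  have "LL (bs (x(k:=t))) m = (\<Sum>j\<in>{1..<m}. bs x j + (if j = fst k then t - x k else 0))"
    unfolding LL_def by (intro sum.cong refl) (simp add: bs_upd[OF k])
  also have "\<dots> = LL (bs x) m + (if fst k < m then t - x k else 0)"
    using k by (auto simp: sum.distrib LL_def)
  finally show ?thesis .
qed

lemma vB_upd: assumes k: "k \<in> S" shows "vB (bs (x(k:=t))) m = vB (bs x) m + gv m k * (t - x k)"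
proof -
  have "fst k < Suc n" using k by auto
  then show ?thesis
    unfolding vB_def TT_def LL_upd[OF k] gv_def by (simp add: algebra_simps)
qed

lemma ev_DD: assumes k: "k \<in> S" and D: "DD x" shows "eventually (\<lambda>t. DD (x(k:=t))) (nhds (x k))"
proof -
  have e1: "eventually (\<lambda>t. \<forall>m\<in>{2..n}. vB (bs (x(k:=t))) m \<noteq> 0) (nhds (x k))"
  proof (rule eventually_ball_finite)
    show "\<forall>m\<in>{2..n}. eventually (\<lambda>t. vB (bs (x(k:=t))) m \<noteq> 0) (nhds (x k))"
    proof
      fix m assume m: "m \<in> {2..n}"
      have "vB (bs x) m \<noteq> 0" using D m by (simp add: DD_def DDB_def)
      then show "eventually (\<lambda>t. vB (bs (x(k:=t))) m \<noteq> 0) (nhds (x k))"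
        unfolding vB_upd[OF k] by (rule aff_ev_ne)
    qed
  qed simp
  have e2: "eventually (\<lambda>t. \<forall>i\<in>{1..n}. 2 \<le> w i \<longrightarrow> wB (bs (x(k:=t))) i \<noteq> 0) (nhds (x k))"
  proof (rule eventually_ball_finite)
    show "\<forall>i\<in>{1..n}. eventually (\<lambda>t. 2 \<le> w i \<longrightarrow> wB (bs (x(k:=t))) i \<noteq> 0) (nhds (x k))"
    proof
      fix i assume i: "i \<in> {1..n}"
      show "eventually (\<lambda>t. 2 \<le> w i \<longrightarrow> wB (bs (x(k:=t))) i \<noteq> 0) (nhds (x k))"
      proof (cases "2 \<le> w i")
        case False then show ?thesis by simp
      next
        case True
        have nz: "wB (bs x) i \<noteq> 0" using D i True by (simp add: DD_def)
        have nz2: "2 * wB (bs x) i \<noteq> 0" using nz by simp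
        have eq: "2 * wB (bs (x(k:=t))) i = 2 * wB (bs x) i + (gv i k + gv (Suc i) k) * (t - x k)" for t
          unfolding wB_closed[OF i] vB_upd[OF k] using wB_closed[OF i, of "bs x"]
          by (simp add: algebra_simps)
        show ?thesis using aff_ev_ne[OF nz2, of "gv i k + gv (Suc i) k" "x k"]
          by eventually_elim (metis eq mult_zero_right)
      qed
    qed
  qed simp
  show ?thesis using e1 e2 by eventually_elim (simp add: DD_def DDB_def)
qed

lemma upd_pts: "k \<in> S \<Longrightarrow> x \<in> pts S \<Longrightarrow> x(k:=t) \<in> pts S"
  by (auto simp: pts_def)

lemma alB_upd_deriv: assumes k: "k \<in> S" and D: "DD x" and i: "i \<in> {1..n}"
  shows "((\<lambda>t. alB (bs (x(k:=t))) i) has_field_derivative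
          (gv 1 k - alB (bs x) i * gv i k) / vB (bs x) i) (at (x k))"
proof (cases "i = 1")
  case True
  then show ?thesis by (simp add: alB_def)
next
  case False
  then have nz: "vB (bs x) i \<noteq> 0" using D i by (simp add: DD_def DDB_def)
  have "((\<lambda>t. (vB (bs x) 1 + gv 1 k * (t - x k)) / (vB (bs x) i + gv i k * (t - x k))) has_field_derivative
          (gv 1 k - (vB (bs x) 1 / vB (bs x) i) * gv i k) / vB (bs x) i) (at (x k))"
    by (rule quot_aff_deriv[OF nz])
  then show ?thesis using False by (simp add: alB_def vB_upd[OF k])
qed

lemma beB_upd_deriv: assumes k: "k \<in> S" and D: "DD x" and i: "i \<in> {1..n}"
  shows "((\<lambda>t. beB (bs (x(k:=t))) i) has_field_derivative
          (gv (Suc n) k - beB (bs x) i * gv (Suc i) k) / vB (bs x) (Suc i)) (at (x k))"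
proof (cases "i = n")
  case True
  then show ?thesis by (simp add: beB_def)
next
  case False
  then have nz: "vB (bs x) (Suc i) \<noteq> 0" using D i by (simp add: DD_def DDB_def)
  have "((\<lambda>t. (vB (bs x) (Suc n) + gv (Suc n) k * (t - x k)) / (vB (bs x) (Suc i) + gv (Suc i) k * (t - x k))) has_field_derivative
          (gv (Suc n) k - (vB (bs x) (Suc n) / vB (bs x) (Suc i)) * gv (Suc i) k) / vB (bs x) (Suc i)) (at (x k))"
    by (rule quot_aff_deriv[OF nz])
  then show ?thesis using False by (simp add: beB_def vB_upd[OF k])
qed

lemma FF_upd_deriv: assumes k: "k \<in> S" and p: "p \<in> S" and D: "DD x"
  shows "((\<lambda>t. FF (x(k:=t)) p) has_field_derivative Gr x p k) (at (x k))"
proof -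
  have i: "fst p \<in> {1..n}" using p by auto
  have xp: "((\<lambda>t. (x(k:=t)) p) has_field_derivative (if k = p then 1 else 0)) (at (x k))"
  proof (cases "k = p")
    case True then show ?thesis by (simp add: DERIV_ident)
  next
    case False then show ?thesis by simp
  qed
  have d: "((\<lambda>t. (x(k:=t)) p * (alB (bs (x(k:=t))) (fst p) * beB (bs (x(k:=t))) (fst p))) has_field_derivative
      (if k = p then 1 else 0) * (alB (bs ((x(k:=x k)))) (fst p) * beB (bs ((x(k:=x k)))) (fst p)) +
      ((gv 1 k - alB (bs x) (fst p) * gv (fst p) k) / vB (bs x) (fst p) * beB (bs ((x(k:=x k)))) (fst p) +
       (gv (Suc n) k - beB (bs x) (fst p) * gv (Suc (fst p)) k) / vB (bs x) (Suc (fst p)) * alB (bs ((x(k:=x k)))) (fst p))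
       * (x(k:=x k)) p) (at (x k))"
    by (intro DERIV_mult xp alB_upd_deriv[OF k D i] beB_upd_deriv[OF k D i])
  have ev: "FF (x(k:=t)) p = (x(k:=t)) p * (alB (bs (x(k:=t))) (fst p) * beB (bs (x(k:=t))) (fst p))" for t
    using p by (simp add: FF_def PB_def)
  show ?thesis unfolding ev
    by (rule DERIV_cong[OF d]) (cases "k = p", simp_all add: Gr_def PB_def algebra_simps)
qed

lemma pd_kahan: assumes x: "x \<in> kahan_dom GG" and k: "k \<in> S" and p: "p \<in> S"
  shows "partial_deriv (\<lambda>z. kahan GG z p) k x = Gr x p k"
proof -
  have D: "DD x" by (rule dom_DD[OF x])
  have xp: "x \<in> pts S" using x by (simp add: kahan_dom_def GG_fst)
  have ev: "eventually (\<lambda>t. kahan GG (x(k:=t)) p = FF (x(k:=t)) p) (nhds (x k))"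
    using ev_DD[OF k D] by eventually_elim (simp add: kahan_FF(2)[OF upd_pts[OF k xp]])
  have "((\<lambda>t. kahan GG (x(k:=t)) p) has_field_derivative Gr x p k) (at (x k))"
    using DERIV_cong_ev[OF refl ev refl] FF_upd_deriv[OF k p D] by simp
  then show ?thesis unfolding partial_deriv_def by (rule DERIV_imp_deriv)
qed

end

definition DI :: "'a::field_char_0 \<Rightarrow> 'a \<Rightarrow> 'a \<Rightarrow> 'a \<Rightarrow> 'a \<Rightarrow> 'a \<Rightarrow> bool \<Rightarrow> 'a" where
  "DI g vi vi1 um c d le = (if le then g/2*(vi + vi1 - 2*um - d + c) else g/2*(2*um - vi - vi1 - d + c))"

definition BR :: "'a::field_char_0 \<Rightarrow> 'a \<Rightarrow> 'a \<Rightarrow> 'a \<Rightarrow> 'a \<Rightarrow> bool \<Rightarrow> 'a" where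
  "BR g um ul c d le = (if le then g/2*(ul - um)*(um - ul + d - c) else g/2*(ul - um)*(ul - um + d - c))"

lemma BR_same[simp]: "BR g v v c d le = 0" by (simp add: BR_def)

lemma ind_restrict:
  fixes f :: "nat \<Rightarrow> 'a::comm_ring_1"
  assumes "m \<le> Suc n"
  shows "(\<Sum>a\<in>{1..n}. (if a < m then 1 else 0) * f a) = (\<Sum>a\<in>{1..<m}. f a)"
proof -
  have "(\<Sum>a\<in>{1..n}. (if a < m then 1 else 0) * f a) = (\<Sum>a\<in>{1..n}. if a < m then f a else 0)"
    by (intro sum.cong) auto
  also have "\<dots> = (\<Sum>a\<in>{a\<in>{1..n}. a < m}. f a)" by (rule sum.inter_filter[symmetric]) simp
  also have "{a\<in>{1..n}. a < m} = {1..<m}" using assms by auto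
  finally show ?thesis .
qed

definition Qs :: "(nat \<Rightarrow> 'a::comm_ring_1) \<Rightarrow> nat \<Rightarrow> nat \<Rightarrow> 'a" where
  "Qs X m l = (\<Sum>a\<in>{1..<m}. \<Sum>b\<in>{1..<l}. sgm a b * X a * X b)"

lemma Qs_closed:
  fixes X :: "nat \<Rightarrow> 'a::field_char_0"
  assumes "1 \<le> m" "1 \<le> l"
  shows "Qs X m l = (if m \<le> l then LL X m * (LL X l - LL X m) else - (LL X l * (LL X m - LL X l)))"
proof (cases "m \<le> l")
  case True then show ?thesis using dsum_ind[OF assms(1) True] by (simp add: Qs_def)
next
  case False
  then have lm: "l \<le> m" by simp
  have "Qs X m l = (\<Sum>b\<in>{1..<l}. \<Sum>a\<in>{1..<m}. sgm a b * X a * X b)" unfolding Qs_def by (rule sum.swap)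
  also have "\<dots> = (\<Sum>b\<in>{1..<l}. \<Sum>a\<in>{1..<m}. - (sgm b a * X b * X a))"
    by (intro sum.cong refl) (auto simp: sgm_def)
  also have "\<dots> = - (\<Sum>b\<in>{1..<l}. \<Sum>a\<in>{1..<m}. sgm b a * X b * X a)" by (simp add: sum_negf)
  also have "\<dots> = - (LL X l * (LL X m - LL X l))" using dsum_ind[OF assms(2) lm] by simp
  finally show ?thesis using False by simp
qed

lemma dsg:
  fixes X :: "nat \<Rightarrow> 'a::field_char_0"
  assumes "m \<le> Suc n" "l \<le> Suc n"
  shows "(\<Sum>a\<in>{1..n}. \<Sum>b\<in>{1..n}. sgm a b * (if a < m then 1 else -1) * (if b < l then 1 else -1) * X a * X b)
     = 4 * Qs X m l - 2 * Qs X m (Suc n) - 2 * Qs X (Suc n) l"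
proof -
  let ?I = "\<lambda>a m. (if a < m then 1 else 0) :: 'a"
  have e: "sgm a b * (if a < m then 1 else -1) * (if b < l then 1 else -1) * X a * X b =
      4 * (?I a m * (?I b l * (sgm a b * X a * X b))) - 2 * (?I a m * (sgm a b * X a * X b))
      - 2 * (?I b l * (sgm a b * X a * X b)) + sgm a b * X a * X b" for a b :: nat
    by (auto simp: algebra_simps)
  have s1: "(\<Sum>a\<in>{1..n}. \<Sum>b\<in>{1..n}. ?I a m * (?I b l * (sgm a b * X a * X b))) = Qs X m l"
  proof -
    have "(\<Sum>a\<in>{1..n}. \<Sum>b\<in>{1..n}. ?I a m * (?I b l * (sgm a b * X a * X b)))
        = (\<Sum>a\<in>{1..n}. ?I a m * (\<Sum>b\<in>{1..n}. ?I b l * (sgm a b * X a * X b)))"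
      by (simp add: sum_distrib_left)
    also have "\<dots> = (\<Sum>a\<in>{1..n}. ?I a m * (\<Sum>b\<in>{1..<l}. sgm a b * X a * X b))"
      unfolding ind_restrict[OF assms(2)] ..
    also have "\<dots> = Qs X m l" unfolding ind_restrict[OF assms(1)] Qs_def ..
    finally show ?thesis .
  qed
  have s2: "(\<Sum>a\<in>{1..n}. \<Sum>b\<in>{1..n}. ?I a m * (sgm a b * X a * X b)) = Qs X m (Suc n)"
  proof -
    have "(\<Sum>a\<in>{1..n}. \<Sum>b\<in>{1..n}. ?I a m * (sgm a b * X a * X b))
        = (\<Sum>a\<in>{1..n}. ?I a m * (\<Sum>b\<in>{1..n}. sgm a b * X a * X b))"
      by (simp add: sum_distrib_left)
    also have "\<dots> = (\<Sum>a\<in>{1..<m}. (\<Sum>b\<in>{1..n}. sgm a b * X a * X b))"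
      unfolding ind_restrict[OF assms(1)] ..
    also have "\<dots> = Qs X m (Suc n)" unfolding Qs_def by (intro sum.cong refl) auto
    finally show ?thesis .
  qed
  have s3: "(\<Sum>a\<in>{1..n}. \<Sum>b\<in>{1..n}. ?I b l * (sgm a b * X a * X b)) = Qs X (Suc n) l"
  proof -
    have "(\<Sum>a\<in>{1..n}. \<Sum>b\<in>{1..n}. ?I b l * (sgm a b * X a * X b))
        = (\<Sum>a\<in>{1..n}. \<Sum>b\<in>{1..<l}. sgm a b * X a * X b)"
      unfolding ind_restrict[OF assms(2)] ..
    also have "\<dots> = Qs X (Suc n) l" unfolding Qs_def by (intro sum.cong refl) auto
    finally show ?thesis .
  qed
  have s4: "(\<Sum>a\<in>{1..n}. \<Sum>b\<in>{1..n}. sgm a b * X a * X b) = 0" by (rule skew_sum0)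
  have lin4: "(\<Sum>a\<in>A. \<Sum>b\<in>B. 4 * F1 a b - 2 * F2 a b - 2 * F3 a b + F4 a b)
     = 4 * (\<Sum>a\<in>A. \<Sum>b\<in>B. F1 a b) - 2 * (\<Sum>a\<in>A. \<Sum>b\<in>B. F2 a b) - 2 * (\<Sum>a\<in>A. \<Sum>b\<in>B. F3 a b) + (\<Sum>a\<in>A. \<Sum>b\<in>B. F4 a b)"
    for A B :: "nat set" and F1 F2 F3 F4 :: "nat \<Rightarrow> nat \<Rightarrow> 'a"
    by (simp add: sum.distrib sum_subtractf sum_distrib_left)
  show ?thesis
    unfolding e lin4 s1 s2 s3 s4 by simp
qed

context KP begin

definition ep :: "nat \<times> nat \<Rightarrow> nat \<times> nat \<Rightarrow> 'a" where
  "ep p k = (if k = p then 1 else 0)"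

definition BB :: "(nat \<times> nat \<Rightarrow> 'a) \<Rightarrow> (nat \<times> nat \<Rightarrow> 'a) \<Rightarrow> (nat \<times> nat \<Rightarrow> 'a) \<Rightarrow> 'a" where
  "BB x G H = (\<Sum>k\<in>S. \<Sum>l\<in>S. g * sgm (fst k) (fst l) * x k * x l * G k * H l)"

definition DeltaV :: "(nat \<Rightarrow> 'a) \<Rightarrow> nat \<Rightarrow> nat \<Rightarrow> 'a" where
  "DeltaV X i m = DI g (vB X i) (vB X (Suc i)) (vB X m) (vB X 1) (vB X (Suc n)) (m \<le> i)"

definition BrV :: "(nat \<Rightarrow> 'a) \<Rightarrow> nat \<Rightarrow> nat \<Rightarrow> 'a" where
  "BrV X m l = BR g (vB X m) (vB X l) (vB X 1) (vB X (Suc n)) (m \<le> l)"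

lemma BB_add_left: "BB x (\<lambda>k. F k + G k) H = BB x F H + BB x G H"
  unfolding BB_def by (simp add: sum.distrib algebra_simps)
lemma BB_add_right: "BB x H (\<lambda>k. F k + G k) = BB x H F + BB x H G"
  unfolding BB_def by (simp add: sum.distrib algebra_simps)
lemma BB_mult_left: "BB x (\<lambda>k. a * F k) H = a * BB x F H"
  unfolding BB_def by (simp add: sum_distrib_left algebra_simps)
lemma BB_mult_right: "BB x H (\<lambda>k. a * F k) = a * BB x H F"
  unfolding BB_def by (simp add: sum_distrib_left algebra_simps)

lemma BB_skew: "BB x G H = - BB x H G"
proof -
  have "BB x G H = (\<Sum>l\<in>S. \<Sum>k\<in>S. g * sgm (fst k) (fst l) * x k * x l * G k * H l)"
    unfolding BB_def by (rule sum.swap)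
  also have "\<dots> = (\<Sum>l\<in>S. \<Sum>k\<in>S. - (g * sgm (fst l) (fst k) * x l * x k * H l * G k))"
    by (intro sum.cong refl) (auto simp: sgm_def)
  also have "\<dots> = - BB x H G" by (simp add: BB_def sum_negf)
  finally show ?thesis .
qed

lemma BB_ep_left: assumes p: "p \<in> S"
  shows "BB x (ep p) H = (\<Sum>l\<in>S. g * sgm (fst p) (fst l) * x p * x l * H l)"
proof -
  have "BB x (ep p) H = (\<Sum>k\<in>S. if k = p then (\<Sum>l\<in>S. g * sgm (fst p) (fst l) * x p * x l * H l) else 0)"
    unfolding BB_def ep_def by (intro sum.cong refl) auto
  also have "\<dots> = (\<Sum>l\<in>S. g * sgm (fst p) (fst l) * x p * x l * H l)"
    using p by (simp add: sum.delta')
  finally show ?thesis .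
qed

lemma BB_ep_ep: assumes p: "p \<in> S" and q: "q \<in> S"
  shows "BB x (ep p) (ep q) = g * sgm (fst p) (fst q) * x p * x q"
proof -
  have "BB x (ep p) (ep q) = (\<Sum>l\<in>S. if l = q then g * sgm (fst p) (fst q) * x p * x q else 0)"
    unfolding BB_ep_left[OF p] ep_def by (intro sum.cong refl) auto
  also have "\<dots> = g * sgm (fst p) (fst q) * x p * x q" using q by (simp add: sum.delta')
  finally show ?thesis .
qed

lemma gv_block: "gv m = (\<lambda>k. g * (if fst k < m then 1 else -1))"
  by (simp add: gv_def fun_eq_iff)

lemma sgs:
  fixes X :: "nat \<Rightarrow> 'a"
  assumes "m \<le> Suc n"
  shows "(\<Sum>j\<in>{1..n}. sgm i j * (if j < m then 1 else -1) * X j)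
     = 2 * (\<Sum>j\<in>{1..<m}. sgm i j * X j) - sig X i"
proof -
  have "(\<Sum>j\<in>{1..n}. sgm i j * (if j < m then 1 else -1) * X j)
      = (\<Sum>j\<in>{1..n}. 2 * ((if j < m then 1 else 0) * (sgm i j * X j)) - sgm i j * X j)"
    by (intro sum.cong refl) auto
  also have "\<dots> = 2 * (\<Sum>j\<in>{1..n}. (if j < m then 1 else 0) * (sgm i j * X j)) - sig X i"
    by (simp add: sum_subtractf sum_distrib_left sig_def)
  also have "\<dots> = 2 * (\<Sum>j\<in>{1..<m}. sgm i j * X j) - sig X i"
    unfolding ind_restrict[OF assms] ..
  finally show ?thesis .
qed

lemma BB_block:
  "BB x (\<lambda>k. \<phi> (fst k)) (\<lambda>l. \<psi> (fst l)) = g * (\<Sum>a\<in>{1..n}. \<Sum>b\<in>{1..n}. sgm a b * \<phi> a * \<psi> b * bs x a * bs x b)"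
proof -
  have inner: "(\<Sum>l\<in>S. g * sgm a (fst l) * y * x l * \<phi> a * \<psi> (fst l)) = (\<Sum>b\<in>{1..n}. (g * sgm a b * y * \<phi> a * \<psi> b) * bs x b)" for a y
  proof -
    have "(\<Sum>l\<in>S. g * sgm a (fst l) * y * x l * \<phi> a * \<psi> (fst l)) = (\<Sum>l\<in>S. (\<lambda>b. g * sgm a b * y * \<phi> a * \<psi> b) (fst l) * x l)"
      by (intro sum.cong refl) (simp add: algebra_simps)
    also have "\<dots> = (\<Sum>b\<in>{1..n}. (g * sgm a b * y * \<phi> a * \<psi> b) * bs x b)" by (rule lin_S)
    finally show ?thesis .
  qed
  have "BB x (\<lambda>k. \<phi> (fst k)) (\<lambda>l. \<psi> (fst l)) = (\<Sum>k\<in>S. (\<lambda>a. \<Sum>b\<in>{1..n}. g * sgm a b * \<phi> a * \<psi> b * bs x b) (fst k) * x k)"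
    unfolding BB_def inner by (intro sum.cong refl) (simp add: sum_distrib_left sum_distrib_right algebra_simps)
  also have "\<dots> = (\<Sum>a\<in>{1..n}. (\<Sum>b\<in>{1..n}. g * sgm a b * \<phi> a * \<psi> b * bs x b) * bs x a)" by (rule lin_S)
  also have "\<dots> = g * (\<Sum>a\<in>{1..n}. \<Sum>b\<in>{1..n}. sgm a b * \<phi> a * \<psi> b * bs x a * bs x b)"
    by (simp add: sum_distrib_left sum_distrib_right algebra_simps)
  finally show ?thesis .
qed

lemma BB_ep_gv: assumes p: "p \<in> S" and m: "m \<in> {1..Suc n}"
  shows "BB x (ep p) (gv m) = x p * DeltaV (bs x) (fst p) m"
proof -
  define i where "i = fst p"
  have i: "i \<in> {1..n}" using p by (auto simp: i_def)
  define X where "X = bs x"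
  have "BB x (ep p) (gv m) = (\<Sum>l\<in>S. (\<lambda>j. (x p * g * g) * (sgm i j * (if j < m then 1 else -1))) (fst l) * x l)"
    unfolding BB_ep_left[OF p] gv_def i_def by (intro sum.cong refl) (simp add: algebra_simps)
  also have "\<dots> = (\<Sum>j\<in>{1..n}. (x p * g * g) * (sgm i j * (if j < m then 1 else -1)) * X j)"
    unfolding X_def by (rule lin_S)
  also have "\<dots> = x p * g * g * (\<Sum>j\<in>{1..n}. sgm i j * (if j < m then 1 else -1) * X j)"
    by (simp add: sum_distrib_left algebra_simps)
  also have "\<dots> = x p * g * g * (2 * (\<Sum>j\<in>{1..<m}. sgm i j * X j) - sig X i)"
    using m sgs[where m=m and i=i and X=X] by simp
  also have "\<dots> = x p * g * g * (2 * (if m \<le> i then - LL X m else LL X m - LL X (Suc i) - LL X i) - (TT X - LL X (Suc i) - LL X i))"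
    using sum_sg_lt[where X=X and i=i and m=m] sig_closed[OF i, of X] i by simp
  also have "\<dots> = x p * DeltaV X i m"
    by (simp add: DeltaV_def DI_def vB_def TT_def field_simps)
  finally show ?thesis by (simp add: X_def i_def)
qed

lemma BB_gv_ep: assumes q: "q \<in> S" and m: "m \<in> {1..Suc n}"
  shows "BB x (gv m) (ep q) = - (x q * DeltaV (bs x) (fst q) m)"
  using BB_skew[of x "gv m" "ep q"] BB_ep_gv[OF q m] by simp

lemma BB_gv_gv: assumes m: "m \<in> {1..Suc n}" and l: "l \<in> {1..Suc n}"
  shows "BB x (gv m) (gv l) = BrV (bs x) m l"
proof -
  define X where "X = bs x"
  have "BB x (gv m) (gv l) = g * (\<Sum>a\<in>{1..n}. \<Sum>b\<in>{1..n}. sgm a b * (g * (if a < m then 1 else -1)) * (g * (if b < l then 1 else -1)) * X a * X b)"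
    unfolding gv_block X_def by (rule BB_block)
  also have "\<dots> = (g * g * g) * (\<Sum>a\<in>{1..n}. \<Sum>b\<in>{1..n}. sgm a b * (if a < m then 1 else -1) * (if b < l then 1 else -1) * X a * X b)"
    by (simp add: sum_distrib_left algebra_simps)
  also have "\<dots> = (g * g * g) * (4 * Qs X m l - 2 * Qs X m (Suc n) - 2 * Qs X (Suc n) l)"
    using m l dsg[where m=m and l=l and X=X and n=n] by simp
  also have "\<dots> = BrV X m l"
    using m l by (cases "l = Suc n"; cases "m = Suc n"; simp add: Qs_closed BrV_def BR_def vB_def TT_def field_simps)
  finally show ?thesis by (simp add: X_def)
qed

end

lemma final_lt_nn:
  fixes g c d vi vi1 vj vj1 :: "'a::field_char_0"
  assumes h0: "Dic = DI g vi vi1 c c d True"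
    and h1: "Dil2 = DI g vi vi1 vj c d False"
    and h2: "Did = DI g vi vi1 d c d False"
    and h3: "Dil4 = DI g vi vi1 vj1 c d False"
    and h4: "Djc = DI g vj vj1 c c d True"
    and h5: "Djm2 = DI g vj vj1 vi c d True"
    and h6: "Djd = DI g vj vj1 d c d False"
    and h7: "Djm4 = DI g vj vj1 vi1 c d True"
    and h8: "B11 = BR g c c c d True"
    and h9: "B12 = BR g c vj c d True"
    and h10: "B13 = BR g c d c d True"
    and h11: "B14 = BR g c vj1 c d True"
    and h12: "B21 = BR g vi c c d False"
    and h13: "B22 = BR g vi vj c d True"
    and h14: "B23 = BR g vi d c d True"
    and h15: "B24 = BR g vi vj1 c d True"
    and h16: "B31 = BR g d c c d False"
    and h17: "B32 = BR g d vj c d False"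
    and h18: "B33 = BR g d d c d True"
    and h19: "B34 = BR g d vj1 c d False"
    and h20: "B41 = BR g vi1 c c d False"
    and h21: "B42 = BR g vi1 vj c d True"
    and h22: "B43 = BR g vi1 d c d True"
    and h23: "B44 = BR g vi1 vj1 c d True"
    and h24: "vi \<noteq> 0 \<and> ai = c/vi \<and> ci1 = bi/vi \<and> ci2 = -(ai*bi)/vi"
    and h25: "vi1 \<noteq> 0 \<and> bi = d/vi1 \<and> ci3 = ai/vi1 \<and> ci4 = -(ai*bi)/vi1"
    and h26: "vj \<noteq> 0 \<and> aj = c/vj \<and> dj1 = bj/vj \<and> dj2 = -(aj*bj)/vj"
    and h27: "vj1 \<noteq> 0 \<and> bj = d/vj1 \<and> dj3 = aj/vj1 \<and> dj4 = -(aj*bj)/vj1"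
    and h28: "PPi = ai*bi"
    and h29: "PPj = aj*bj"
  shows "PPi * (dj1 * Dic + dj2 * Dil2 + dj3 * Did + dj4 * Dil4) - PPj * (ci1 * Djc + ci2 * Djm2 + ci3 * Djd + ci4 * Djm4) + (ci1 * (dj1 * B11 + dj2 * B12 + dj3 * B13 + dj4 * B14) + ci2 * (dj1 * B21 + dj2 * B22 + dj3 * B23 + dj4 * B24) + ci3 * (dj1 * B31 + dj2 * B32 + dj3 * B33 + dj4 * B34) + ci4 * (dj1 * B41 + dj2 * B42 + dj3 * B43 + dj4 * B44)) = 0"
  using h24 h25 h26 h27
  unfolding h28 h29 h0 h1 h2 h3 h4 h5 h6 h7 h8 h9 h10 h11 h12 h13 h14 h15 h16 h17 h18 h19 h20 h21 h22 h23 DI_def BR_def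
  by (elim conjE; simp add: field_simps)

lemma final_lt_nd:
  fixes g c d vi vi1 vj vj1 :: "'a::field_char_0"
  assumes h0: "Dic = DI g vi vi1 c c d True"
    and h1: "Dil2 = DI g vi vi1 vj c d False"
    and h2: "Did = DI g vi vi1 d c d False"
    and h3: "Dil4 = DI g vi vi1 vj1 c d False"
    and h4: "Djc = DI g vj vj1 c c d True"
    and h5: "Djm2 = DI g vj vj1 vi c d True"
    and h6: "Djd = DI g vj vj1 d c d False"
    and h7: "Djm4 = DI g vj vj1 vi1 c d True"
    and h8: "B11 = BR g c c c d True"
    and h9: "B12 = BR g c vj c d True"
    and h10: "B13 = BR g c d c d True"
    and h11: "B14 = BR g c vj1 c d True"
    and h12: "B21 = BR g vi c c d False"
    and h13: "B22 = BR g vi vj c d True"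
    and h14: "B23 = BR g vi d c d True"
    and h15: "B24 = BR g vi vj1 c d True"
    and h16: "B31 = BR g d c c d False"
    and h17: "B32 = BR g d vj c d False"
    and h18: "B33 = BR g d d c d True"
    and h19: "B34 = BR g d vj1 c d False"
    and h20: "B41 = BR g vi1 c c d False"
    and h21: "B42 = BR g vi1 vj c d True"
    and h22: "B43 = BR g vi1 d c d True"
    and h23: "B44 = BR g vi1 vj1 c d True"
    and h24: "vi \<noteq> 0 \<and> ai = c/vi \<and> ci1 = bi/vi \<and> ci2 = -(ai*bi)/vi"
    and h25: "vi1 \<noteq> 0 \<and> bi = d/vi1 \<and> ci3 = ai/vi1 \<and> ci4 = -(ai*bi)/vi1"
    and h26: "vj \<noteq> 0 \<and> aj = c/vj \<and> dj1 = bj/vj \<and> dj2 = -(aj*bj)/vj"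
    and h27: "vj1 = d \<and> bj = 1 \<and> dj4 = -dj3"
    and h28: "PPi = ai*bi"
    and h29: "PPj = aj*bj"
  shows "PPi * (dj1 * Dic + dj2 * Dil2 + dj3 * Did + dj4 * Dil4) - PPj * (ci1 * Djc + ci2 * Djm2 + ci3 * Djd + ci4 * Djm4) + (ci1 * (dj1 * B11 + dj2 * B12 + dj3 * B13 + dj4 * B14) + ci2 * (dj1 * B21 + dj2 * B22 + dj3 * B23 + dj4 * B24) + ci3 * (dj1 * B31 + dj2 * B32 + dj3 * B33 + dj4 * B34) + ci4 * (dj1 * B41 + dj2 * B42 + dj3 * B43 + dj4 * B44)) = 0"
  using h24 h25 h26 h27
  unfolding h28 h29 h0 h1 h2 h3 h4 h5 h6 h7 h8 h9 h10 h11 h12 h13 h14 h15 h16 h17 h18 h19 h20 h21 h22 h23 DI_def BR_def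
  by (elim conjE; simp add: field_simps)

lemma final_lt_dn:
  fixes g c d vi vi1 vj vj1 :: "'a::field_char_0"
  assumes h0: "Dic = DI g vi vi1 c c d True"
    and h1: "Dil2 = DI g vi vi1 vj c d False"
    and h2: "Did = DI g vi vi1 d c d False"
    and h3: "Dil4 = DI g vi vi1 vj1 c d False"
    and h4: "Djc = DI g vj vj1 c c d True"
    and h5: "Djm2 = DI g vj vj1 vi c d True"
    and h6: "Djd = DI g vj vj1 d c d False"
    and h7: "Djm4 = DI g vj vj1 vi1 c d True"
    and h8: "B11 = BR g c c c d True"
    and h9: "B12 = BR g c vj c d True"
    and h10: "B13 = BR g c d c d True"
    and h11: "B14 = BR g c vj1 c d True"
    and h12: "B21 = BR g vi c c d False"
    and h13: "B22 = BR g vi vj c d True"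
    and h14: "B23 = BR g vi d c d True"
    and h15: "B24 = BR g vi vj1 c d True"
    and h16: "B31 = BR g d c c d False"
    and h17: "B32 = BR g d vj c d False"
    and h18: "B33 = BR g d d c d True"
    and h19: "B34 = BR g d vj1 c d False"
    and h20: "B41 = BR g vi1 c c d False"
    and h21: "B42 = BR g vi1 vj c d True"
    and h22: "B43 = BR g vi1 d c d True"
    and h23: "B44 = BR g vi1 vj1 c d True"
    and h24: "vi = c \<and> ai = 1 \<and> ci2 = -ci1"
    and h25: "vi1 \<noteq> 0 \<and> bi = d/vi1 \<and> ci3 = ai/vi1 \<and> ci4 = -(ai*bi)/vi1"
    and h26: "vj \<noteq> 0 \<and> aj = c/vj \<and> dj1 = bj/vj \<and> dj2 = -(aj*bj)/vj"
    and h27: "vj1 \<noteq> 0 \<and> bj = d/vj1 \<and> dj3 = aj/vj1 \<and> dj4 = -(aj*bj)/vj1"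
    and h28: "PPi = ai*bi"
    and h29: "PPj = aj*bj"
  shows "PPi * (dj1 * Dic + dj2 * Dil2 + dj3 * Did + dj4 * Dil4) - PPj * (ci1 * Djc + ci2 * Djm2 + ci3 * Djd + ci4 * Djm4) + (ci1 * (dj1 * B11 + dj2 * B12 + dj3 * B13 + dj4 * B14) + ci2 * (dj1 * B21 + dj2 * B22 + dj3 * B23 + dj4 * B24) + ci3 * (dj1 * B31 + dj2 * B32 + dj3 * B33 + dj4 * B34) + ci4 * (dj1 * B41 + dj2 * B42 + dj3 * B43 + dj4 * B44)) = 0"
  using h24 h25 h26 h27
  unfolding h28 h29 h0 h1 h2 h3 h4 h5 h6 h7 h8 h9 h10 h11 h12 h13 h14 h15 h16 h17 h18 h19 h20 h21 h22 h23 DI_def BR_def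
  by (elim conjE; simp add: field_simps)

lemma final_lt_dd:
  fixes g c d vi vi1 vj vj1 :: "'a::field_char_0"
  assumes h0: "Dic = DI g vi vi1 c c d True"
    and h1: "Dil2 = DI g vi vi1 vj c d False"
    and h2: "Did = DI g vi vi1 d c d False"
    and h3: "Dil4 = DI g vi vi1 vj1 c d False"
    and h4: "Djc = DI g vj vj1 c c d True"
    and h5: "Djm2 = DI g vj vj1 vi c d True"
    and h6: "Djd = DI g vj vj1 d c d False"
    and h7: "Djm4 = DI g vj vj1 vi1 c d True"
    and h8: "B11 = BR g c c c d True"
    and h9: "B12 = BR g c vj c d True"
    and h10: "B13 = BR g c d c d True"
    and h11: "B14 = BR g c vj1 c d True"
    and h12: "B21 = BR g vi c c d False"
    and h13: "B22 = BR g vi vj c d True"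
    and h14: "B23 = BR g vi d c d True"
    and h15: "B24 = BR g vi vj1 c d True"
    and h16: "B31 = BR g d c c d False"
    and h17: "B32 = BR g d vj c d False"
    and h18: "B33 = BR g d d c d True"
    and h19: "B34 = BR g d vj1 c d False"
    and h20: "B41 = BR g vi1 c c d False"
    and h21: "B42 = BR g vi1 vj c d True"
    and h22: "B43 = BR g vi1 d c d True"
    and h23: "B44 = BR g vi1 vj1 c d True"
    and h24: "vi = c \<and> ai = 1 \<and> ci2 = -ci1"
    and h25: "vi1 \<noteq> 0 \<and> bi = d/vi1 \<and> ci3 = ai/vi1 \<and> ci4 = -(ai*bi)/vi1"
    and h26: "vj \<noteq> 0 \<and> aj = c/vj \<and> dj1 = bj/vj \<and> dj2 = -(aj*bj)/vj"
    and h27: "vj1 = d \<and> bj = 1 \<and> dj4 = -dj3"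
    and h28: "PPi = ai*bi"
    and h29: "PPj = aj*bj"
  shows "PPi * (dj1 * Dic + dj2 * Dil2 + dj3 * Did + dj4 * Dil4) - PPj * (ci1 * Djc + ci2 * Djm2 + ci3 * Djd + ci4 * Djm4) + (ci1 * (dj1 * B11 + dj2 * B12 + dj3 * B13 + dj4 * B14) + ci2 * (dj1 * B21 + dj2 * B22 + dj3 * B23 + dj4 * B24) + ci3 * (dj1 * B31 + dj2 * B32 + dj3 * B33 + dj4 * B34) + ci4 * (dj1 * B41 + dj2 * B42 + dj3 * B43 + dj4 * B44)) = 0"
  using h24 h25 h26 h27
  unfolding h28 h29 h0 h1 h2 h3 h4 h5 h6 h7 h8 h9 h10 h11 h12 h13 h14 h15 h16 h17 h18 h19 h20 h21 h22 h23 DI_def BR_def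
  by (elim conjE; simp add: field_simps)

lemma final_eq_nn:
  fixes g c d vi vi1 vj vj1 :: "'a::field_char_0"
  assumes h0: "Dic = DI g vi vi1 c c d True"
    and h1: "Dil2 = DI g vi vi1 vi c d True"
    and h2: "Did = DI g vi vi1 d c d False"
    and h3: "Dil4 = DI g vi vi1 vi1 c d False"
    and h4: "Djc = DI g vi vi1 c c d True"
    and h5: "Djm2 = DI g vi vi1 vi c d True"
    and h6: "Djd = DI g vi vi1 d c d False"
    and h7: "Djm4 = DI g vi vi1 vi1 c d False"
    and h8: "B11 = BR g c c c d True"
    and h9: "B12 = BR g c vi c d True"
    and h10: "B13 = BR g c d c d True"
    and h11: "B14 = BR g c vi1 c d True"
    and h12: "B21 = BR g vi c c d False"
    and h13: "B22 = BR g vi vi c d True"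
    and h14: "B23 = BR g vi d c d True"
    and h15: "B24 = BR g vi vi1 c d True"
    and h16: "B31 = BR g d c c d False"
    and h17: "B32 = BR g d vi c d False"
    and h18: "B33 = BR g d d c d True"
    and h19: "B34 = BR g d vi1 c d False"
    and h20: "B41 = BR g vi1 c c d False"
    and h21: "B42 = BR g vi1 vi c d False"
    and h22: "B43 = BR g vi1 d c d True"
    and h23: "B44 = BR g vi1 vi1 c d True"
    and h24: "vi \<noteq> 0 \<and> ai = c/vi \<and> ci1 = bi/vi \<and> ci2 = -(ai*bi)/vi"
    and h25: "vi1 \<noteq> 0 \<and> bi = d/vi1 \<and> ci3 = ai/vi1 \<and> ci4 = -(ai*bi)/vi1"
    and h26: "PPi = ai*bi"
  shows "PPi * (ci1 * Dic + ci2 * Dil2 + ci3 * Did + ci4 * Dil4) - PPi * (ci1 * Djc + ci2 * Djm2 + ci3 * Djd + ci4 * Djm4) + (ci1 * (ci1 * B11 + ci2 * B12 + ci3 * B13 + ci4 * B14) + ci2 * (ci1 * B21 + ci2 * B22 + ci3 * B23 + ci4 * B24) + ci3 * (ci1 * B31 + ci2 * B32 + ci3 * B33 + ci4 * B34) + ci4 * (ci1 * B41 + ci2 * B42 + ci3 * B43 + ci4 * B44)) = 0"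
  using h24 h25
  unfolding h26 h0 h1 h2 h3 h4 h5 h6 h7 h8 h9 h10 h11 h12 h13 h14 h15 h16 h17 h18 h19 h20 h21 h22 h23 DI_def BR_def
  by (elim conjE; simp add: field_simps)

lemma final_eq_nd:
  fixes g c d vi vi1 vj vj1 :: "'a::field_char_0"
  assumes h0: "Dic = DI g vi vi1 c c d True"
    and h1: "Dil2 = DI g vi vi1 vi c d True"
    and h2: "Did = DI g vi vi1 d c d False"
    and h3: "Dil4 = DI g vi vi1 vi1 c d False"
    and h4: "Djc = DI g vi vi1 c c d True"
    and h5: "Djm2 = DI g vi vi1 vi c d True"
    and h6: "Djd = DI g vi vi1 d c d False"
    and h7: "Djm4 = DI g vi vi1 vi1 c d False"
    and h8: "B11 = BR g c c c d True"
    and h9: "B12 = BR g c vi c d True"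
    and h10: "B13 = BR g c d c d True"
    and h11: "B14 = BR g c vi1 c d True"
    and h12: "B21 = BR g vi c c d False"
    and h13: "B22 = BR g vi vi c d True"
    and h14: "B23 = BR g vi d c d True"
    and h15: "B24 = BR g vi vi1 c d True"
    and h16: "B31 = BR g d c c d False"
    and h17: "B32 = BR g d vi c d False"
    and h18: "B33 = BR g d d c d True"
    and h19: "B34 = BR g d vi1 c d False"
    and h20: "B41 = BR g vi1 c c d False"
    and h21: "B42 = BR g vi1 vi c d False"
    and h22: "B43 = BR g vi1 d c d True"
    and h23: "B44 = BR g vi1 vi1 c d True"
    and h24: "vi \<noteq> 0 \<and> ai = c/vi \<and> ci1 = bi/vi \<and> ci2 = -(ai*bi)/vi"
    and h25: "vi1 = d \<and> bi = 1 \<and> ci4 = -ci3"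
    and h26: "PPi = ai*bi"
  shows "PPi * (ci1 * Dic + ci2 * Dil2 + ci3 * Did + ci4 * Dil4) - PPi * (ci1 * Djc + ci2 * Djm2 + ci3 * Djd + ci4 * Djm4) + (ci1 * (ci1 * B11 + ci2 * B12 + ci3 * B13 + ci4 * B14) + ci2 * (ci1 * B21 + ci2 * B22 + ci3 * B23 + ci4 * B24) + ci3 * (ci1 * B31 + ci2 * B32 + ci3 * B33 + ci4 * B34) + ci4 * (ci1 * B41 + ci2 * B42 + ci3 * B43 + ci4 * B44)) = 0"
  using h24 h25
  unfolding h26 h0 h1 h2 h3 h4 h5 h6 h7 h8 h9 h10 h11 h12 h13 h14 h15 h16 h17 h18 h19 h20 h21 h22 h23 DI_def BR_def
  by (elim conjE; simp add: field_simps)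

lemma final_eq_dn:
  fixes g c d vi vi1 vj vj1 :: "'a::field_char_0"
  assumes h0: "Dic = DI g vi vi1 c c d True"
    and h1: "Dil2 = DI g vi vi1 vi c d True"
    and h2: "Did = DI g vi vi1 d c d False"
    and h3: "Dil4 = DI g vi vi1 vi1 c d False"
    and h4: "Djc = DI g vi vi1 c c d True"
    and h5: "Djm2 = DI g vi vi1 vi c d True"
    and h6: "Djd = DI g vi vi1 d c d False"
    and h7: "Djm4 = DI g vi vi1 vi1 c d False"
    and h8: "B11 = BR g c c c d True"
    and h9: "B12 = BR g c vi c d True"
    and h10: "B13 = BR g c d c d True"
    and h11: "B14 = BR g c vi1 c d True"
    and h12: "B21 = BR g vi c c d False"
    and h13: "B22 = BR g vi vi c d True"
    and h14: "B23 = BR g vi d c d True"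
    and h15: "B24 = BR g vi vi1 c d True"
    and h16: "B31 = BR g d c c d False"
    and h17: "B32 = BR g d vi c d False"
    and h18: "B33 = BR g d d c d True"
    and h19: "B34 = BR g d vi1 c d False"
    and h20: "B41 = BR g vi1 c c d False"
    and h21: "B42 = BR g vi1 vi c d False"
    and h22: "B43 = BR g vi1 d c d True"
    and h23: "B44 = BR g vi1 vi1 c d True"
    and h24: "vi = c \<and> ai = 1 \<and> ci2 = -ci1"
    and h25: "vi1 \<noteq> 0 \<and> bi = d/vi1 \<and> ci3 = ai/vi1 \<and> ci4 = -(ai*bi)/vi1"
    and h26: "PPi = ai*bi"
  shows "PPi * (ci1 * Dic + ci2 * Dil2 + ci3 * Did + ci4 * Dil4) - PPi * (ci1 * Djc + ci2 * Djm2 + ci3 * Djd + ci4 * Djm4) + (ci1 * (ci1 * B11 + ci2 * B12 + ci3 * B13 + ci4 * B14) + ci2 * (ci1 * B21 + ci2 * B22 + ci3 * B23 + ci4 * B24) + ci3 * (ci1 * B31 + ci2 * B32 + ci3 * B33 + ci4 * B34) + ci4 * (ci1 * B41 + ci2 * B42 + ci3 * B43 + ci4 * B44)) = 0"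
  using h24 h25
  unfolding h26 h0 h1 h2 h3 h4 h5 h6 h7 h8 h9 h10 h11 h12 h13 h14 h15 h16 h17 h18 h19 h20 h21 h22 h23 DI_def BR_def
  by (elim conjE; simp add: field_simps)

lemma final_eq_dd:
  fixes g c d vi vi1 vj vj1 :: "'a::field_char_0"
  assumes h0: "Dic = DI g vi vi1 c c d True"
    and h1: "Dil2 = DI g vi vi1 vi c d True"
    and h2: "Did = DI g vi vi1 d c d False"
    and h3: "Dil4 = DI g vi vi1 vi1 c d False"
    and h4: "Djc = DI g vi vi1 c c d True"
    and h5: "Djm2 = DI g vi vi1 vi c d True"
    and h6: "Djd = DI g vi vi1 d c d False"
    and h7: "Djm4 = DI g vi vi1 vi1 c d False"
    and h8: "B11 = BR g c c c d True"
    and h9: "B12 = BR g c vi c d True"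
    and h10: "B13 = BR g c d c d True"
    and h11: "B14 = BR g c vi1 c d True"
    and h12: "B21 = BR g vi c c d False"
    and h13: "B22 = BR g vi vi c d True"
    and h14: "B23 = BR g vi d c d True"
    and h15: "B24 = BR g vi vi1 c d True"
    and h16: "B31 = BR g d c c d False"
    and h17: "B32 = BR g d vi c d False"
    and h18: "B33 = BR g d d c d True"
    and h19: "B34 = BR g d vi1 c d False"
    and h20: "B41 = BR g vi1 c c d False"
    and h21: "B42 = BR g vi1 vi c d False"
    and h22: "B43 = BR g vi1 d c d True"
    and h23: "B44 = BR g vi1 vi1 c d True"
    and h24: "vi = c \<and> ai = 1 \<and> ci2 = -ci1"
    and h25: "vi1 = d \<and> bi = 1 \<and> ci4 = -ci3"
    and h26: "PPi = ai*bi"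
  shows "PPi * (ci1 * Dic + ci2 * Dil2 + ci3 * Did + ci4 * Dil4) - PPi * (ci1 * Djc + ci2 * Djm2 + ci3 * Djd + ci4 * Djm4) + (ci1 * (ci1 * B11 + ci2 * B12 + ci3 * B13 + ci4 * B14) + ci2 * (ci1 * B21 + ci2 * B22 + ci3 * B23 + ci4 * B24) + ci3 * (ci1 * B31 + ci2 * B32 + ci3 * B33 + ci4 * B34) + ci4 * (ci1 * B41 + ci2 * B42 + ci3 * B43 + ci4 * B44)) = 0"
  using h24 h25
  unfolding h26 h0 h1 h2 h3 h4 h5 h6 h7 h8 h9 h10 h11 h12 h13 h14 h15 h16 h17 h18 h19 h20 h21 h22 h23 DI_def BR_def
  by (elim conjE; simp add: field_simps)

lemma final_lt:
  fixes g c d vi vi1 vj vj1 :: "'a::field_char_0"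
  assumes h0: "Dic = DI g vi vi1 c c d True"
    and h1: "Dil2 = DI g vi vi1 vj c d False"
    and h2: "Did = DI g vi vi1 d c d False"
    and h3: "Dil4 = DI g vi vi1 vj1 c d False"
    and h4: "Djc = DI g vj vj1 c c d True"
    and h5: "Djm2 = DI g vj vj1 vi c d True"
    and h6: "Djd = DI g vj vj1 d c d False"
    and h7: "Djm4 = DI g vj vj1 vi1 c d True"
    and h8: "B11 = BR g c c c d True"
    and h9: "B12 = BR g c vj c d True"
    and h10: "B13 = BR g c d c d True"
    and h11: "B14 = BR g c vj1 c d True"
    and h12: "B21 = BR g vi c c d False"
    and h13: "B22 = BR g vi vj c d True"
    and h14: "B23 = BR g vi d c d True"
    and h15: "B24 = BR g vi vj1 c d True"
    and h16: "B31 = BR g d c c d False"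
    and h17: "B32 = BR g d vj c d False"
    and h18: "B33 = BR g d d c d True"
    and h19: "B34 = BR g d vj1 c d False"
    and h20: "B41 = BR g vi1 c c d False"
    and h21: "B42 = BR g vi1 vj c d True"
    and h22: "B43 = BR g vi1 d c d True"
    and h23: "B44 = BR g vi1 vj1 c d True"
    and h24: "(vi \<noteq> 0 \<and> ai = c/vi \<and> ci1 = bi/vi \<and> ci2 = -(ai*bi)/vi) \<or> (vi = c \<and> ai = 1 \<and> ci2 = -ci1)"
    and h25: "vi1 \<noteq> 0 \<and> bi = d/vi1 \<and> ci3 = ai/vi1 \<and> ci4 = -(ai*bi)/vi1"
    and h26: "vj \<noteq> 0 \<and> aj = c/vj \<and> dj1 = bj/vj \<and> dj2 = -(aj*bj)/vj"
    and h27: "(vj1 \<noteq> 0 \<and> bj = d/vj1 \<and> dj3 = aj/vj1 \<and> dj4 = -(aj*bj)/vj1) \<or> (vj1 = d \<and> bj = 1 \<and> dj4 = -dj3)"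
    and h28: "PPi = ai*bi"
    and h29: "PPj = aj*bj"
  shows "PPi * (dj1 * Dic + dj2 * Dil2 + dj3 * Did + dj4 * Dil4) - PPj * (ci1 * Djc + ci2 * Djm2 + ci3 * Djd + ci4 * Djm4) + (ci1 * (dj1 * B11 + dj2 * B12 + dj3 * B13 + dj4 * B14) + ci2 * (dj1 * B21 + dj2 * B22 + dj3 * B23 + dj4 * B24) + ci3 * (dj1 * B31 + dj2 * B32 + dj3 * B33 + dj4 * B34) + ci4 * (dj1 * B41 + dj2 * B42 + dj3 * B43 + dj4 * B44)) = 0"
  using h24
proof
  assume a: "vi \<noteq> 0 \<and> ai = c/vi \<and> ci1 = bi/vi \<and> ci2 = -(ai*bi)/vi"
  from h27 show ?thesis
  proof
    assume b: "vj1 \<noteq> 0 \<and> bj = d/vj1 \<and> dj3 = aj/vj1 \<and> dj4 = -(aj*bj)/vj1"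
    show ?thesis by (rule final_lt_nn[OF h0 h1 h2 h3 h4 h5 h6 h7 h8 h9 h10 h11 h12 h13 h14 h15 h16 h17 h18 h19 h20 h21 h22 h23 a h25 h26 b h28 h29])
  next
    assume b: "vj1 = d \<and> bj = 1 \<and> dj4 = -dj3"
    show ?thesis by (rule final_lt_nd[OF h0 h1 h2 h3 h4 h5 h6 h7 h8 h9 h10 h11 h12 h13 h14 h15 h16 h17 h18 h19 h20 h21 h22 h23 a h25 h26 b h28 h29])
  qed
next
  assume a: "vi = c \<and> ai = 1 \<and> ci2 = -ci1"
  from h27 show ?thesis
  proof
    assume b: "vj1 \<noteq> 0 \<and> bj = d/vj1 \<and> dj3 = aj/vj1 \<and> dj4 = -(aj*bj)/vj1"
    show ?thesis by (rule final_lt_dn[OF h0 h1 h2 h3 h4 h5 h6 h7 h8 h9 h10 h11 h12 h13 h14 h15 h16 h17 h18 h19 h20 h21 h22 h23 a h25 h26 b h28 h29])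
  next
    assume b: "vj1 = d \<and> bj = 1 \<and> dj4 = -dj3"
    show ?thesis by (rule final_lt_dd[OF h0 h1 h2 h3 h4 h5 h6 h7 h8 h9 h10 h11 h12 h13 h14 h15 h16 h17 h18 h19 h20 h21 h22 h23 a h25 h26 b h28 h29])
  qed
qed

lemma final_eq:
  fixes g c d vi vi1 vj vj1 :: "'a::field_char_0"
  assumes h0: "Dic = DI g vi vi1 c c d True"
    and h1: "Dil2 = DI g vi vi1 vi c d True"
    and h2: "Did = DI g vi vi1 d c d False"
    and h3: "Dil4 = DI g vi vi1 vi1 c d False"
    and h4: "Djc = DI g vi vi1 c c d True"
    and h5: "Djm2 = DI g vi vi1 vi c d True"
    and h6: "Djd = DI g vi vi1 d c d False"
    and h7: "Djm4 = DI g vi vi1 vi1 c d False"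
    and h8: "B11 = BR g c c c d True"
    and h9: "B12 = BR g c vi c d True"
    and h10: "B13 = BR g c d c d True"
    and h11: "B14 = BR g c vi1 c d True"
    and h12: "B21 = BR g vi c c d False"
    and h13: "B22 = BR g vi vi c d True"
    and h14: "B23 = BR g vi d c d True"
    and h15: "B24 = BR g vi vi1 c d True"
    and h16: "B31 = BR g d c c d False"
    and h17: "B32 = BR g d vi c d False"
    and h18: "B33 = BR g d d c d True"
    and h19: "B34 = BR g d vi1 c d False"
    and h20: "B41 = BR g vi1 c c d False"
    and h21: "B42 = BR g vi1 vi c d False"
    and h22: "B43 = BR g vi1 d c d True"
    and h23: "B44 = BR g vi1 vi1 c d True"
    and h24: "(vi \<noteq> 0 \<and> ai = c/vi \<and> ci1 = bi/vi \<and> ci2 = -(ai*bi)/vi) \<or> (vi = c \<and> ai = 1 \<and> ci2 = -ci1)"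
    and h25: "(vi1 \<noteq> 0 \<and> bi = d/vi1 \<and> ci3 = ai/vi1 \<and> ci4 = -(ai*bi)/vi1) \<or> (vi1 = d \<and> bi = 1 \<and> ci4 = -ci3)"
    and h26: "PPi = ai*bi"
  shows "PPi * (ci1 * Dic + ci2 * Dil2 + ci3 * Did + ci4 * Dil4) - PPi * (ci1 * Djc + ci2 * Djm2 + ci3 * Djd + ci4 * Djm4) + (ci1 * (ci1 * B11 + ci2 * B12 + ci3 * B13 + ci4 * B14) + ci2 * (ci1 * B21 + ci2 * B22 + ci3 * B23 + ci4 * B24) + ci3 * (ci1 * B31 + ci2 * B32 + ci3 * B33 + ci4 * B34) + ci4 * (ci1 * B41 + ci2 * B42 + ci3 * B43 + ci4 * B44)) = 0"
  using h24
proof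
  assume a: "vi \<noteq> 0 \<and> ai = c/vi \<and> ci1 = bi/vi \<and> ci2 = -(ai*bi)/vi"
  from h25 show ?thesis
  proof
    assume b: "vi1 \<noteq> 0 \<and> bi = d/vi1 \<and> ci3 = ai/vi1 \<and> ci4 = -(ai*bi)/vi1"
    show ?thesis by (rule final_eq_nn[OF h0 h1 h2 h3 h4 h5 h6 h7 h8 h9 h10 h11 h12 h13 h14 h15 h16 h17 h18 h19 h20 h21 h22 h23 a b h26])
  next
    assume b: "vi1 = d \<and> bi = 1 \<and> ci4 = -ci3"
    show ?thesis by (rule final_eq_nd[OF h0 h1 h2 h3 h4 h5 h6 h7 h8 h9 h10 h11 h12 h13 h14 h15 h16 h17 h18 h19 h20 h21 h22 h23 a b h26])
  qed
next
  assume a: "vi = c \<and> ai = 1 \<and> ci2 = -ci1"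
  from h25 show ?thesis
  proof
    assume b: "vi1 \<noteq> 0 \<and> bi = d/vi1 \<and> ci3 = ai/vi1 \<and> ci4 = -(ai*bi)/vi1"
    show ?thesis by (rule final_eq_dn[OF h0 h1 h2 h3 h4 h5 h6 h7 h8 h9 h10 h11 h12 h13 h14 h15 h16 h17 h18 h19 h20 h21 h22 h23 a b h26])
  next
    assume b: "vi1 = d \<and> bi = 1 \<and> ci4 = -ci3"
    show ?thesis by (rule final_eq_dd[OF h0 h1 h2 h3 h4 h5 h6 h7 h8 h9 h10 h11 h12 h13 h14 h15 h16 h17 h18 h19 h20 h21 h22 h23 a b h26])
  qed
qed


context KP begin

definition cA where "cA X i = beB X i / vB X i"
definition cB where "cB X i = - (alB X i * beB X i) / vB X i"
definition cC where "cC X i = alB X i / vB X (Suc i)"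
definition cD where "cD X i = - (alB X i * beB X i) / vB X (Suc i)"

lemma Gr_alt: "Gr x p = (\<lambda>k. PB (bs x) (fst p) * ep p k + x p * (cA (bs x) (fst p) * gv 1 k + cB (bs x) (fst p) * gv (fst p) k
   + cC (bs x) (fst p) * gv (Suc n) k + cD (bs x) (fst p) * gv (Suc (fst p)) k))"
  by (rule ext) (simp add: Gr_def ep_def cA_def cB_def cC_def cD_def divide_inverse algebra_simps)

lemma BrV_flag: assumes "(m \<le> l \<longleftrightarrow> fl) \<or> vB X m = vB X l"
  shows "BrV X m l = BR g (vB X m) (vB X l) (vB X 1) (vB X (Suc n)) fl"
  using assms by (auto simp: BrV_def)

lemma DeltaV_flag: assumes "m \<le> i \<longleftrightarrow> fl"
  shows "DeltaV X i m = DI g (vB X i) (vB X (Suc i)) (vB X m) (vB X 1) (vB X (Suc n)) fl"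
  using assms by (simp add: DeltaV_def)

lemma hypA: assumes D: "DD x" and i: "i \<in> {1..n}"
  shows "(vB (bs x) i \<noteq> 0 \<and> alB (bs x) i = vB (bs x) 1 / vB (bs x) i \<and> cA (bs x) i = beB (bs x) i / vB (bs x) i \<and> cB (bs x) i = -(alB (bs x) i * beB (bs x) i) / vB (bs x) i)
    \<or> (vB (bs x) i = vB (bs x) 1 \<and> alB (bs x) i = 1 \<and> cB (bs x) i = - cA (bs x) i)"
proof (cases "i = 1")
  case True then show ?thesis by (simp add: alB_def cA_def cB_def)
next
  case False
  then have "vB (bs x) i \<noteq> 0" using D i by (simp add: DD_def DDB_def)
  then show ?thesis using False by (simp add: alB_def cA_def cB_def)
qed

lemma hypB: assumes D: "DD x" and i: "i \<in> {1..n}"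
  shows "(vB (bs x) (Suc i) \<noteq> 0 \<and> beB (bs x) i = vB (bs x) (Suc n) / vB (bs x) (Suc i) \<and> cC (bs x) i = alB (bs x) i / vB (bs x) (Suc i) \<and> cD (bs x) i = -(alB (bs x) i * beB (bs x) i) / vB (bs x) (Suc i))
    \<or> (vB (bs x) (Suc i) = vB (bs x) (Suc n) \<and> beB (bs x) i = 1 \<and> cD (bs x) i = - cC (bs x) i)"
proof (cases "i = n")
  case True then show ?thesis by (simp add: beB_def cC_def cD_def)
next
  case False
  then have "vB (bs x) (Suc i) \<noteq> 0" using D i by (simp add: DD_def DDB_def)
  then show ?thesis using False by (simp add: beB_def cC_def cD_def)
qed

end

context KP begin

lemma hypA': assumes D: "DD x" and i: "i \<in> {1..n}" and ni: "i \<noteq> 1"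
  shows "vB (bs x) i \<noteq> 0 \<and> alB (bs x) i = vB (bs x) 1 / vB (bs x) i \<and> cA (bs x) i = beB (bs x) i / vB (bs x) i \<and> cB (bs x) i = -(alB (bs x) i * beB (bs x) i) / vB (bs x) i"
proof -
  have "vB (bs x) i \<noteq> 0" using D i ni by (simp add: DD_def DDB_def)
  then show ?thesis using ni by (simp add: alB_def cA_def cB_def)
qed

lemma hypB': assumes D: "DD x" and i: "i \<in> {1..n}" and ni: "i \<noteq> n"
  shows "vB (bs x) (Suc i) \<noteq> 0 \<and> beB (bs x) i = vB (bs x) (Suc n) / vB (bs x) (Suc i) \<and> cC (bs x) i = alB (bs x) i / vB (bs x) (Suc i) \<and> cD (bs x) i = -(alB (bs x) i * beB (bs x) i) / vB (bs x) (Suc i)"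
proof -
  have "vB (bs x) (Suc i) \<noteq> 0" using D i ni by (simp add: DD_def DDB_def)
  then show ?thesis using ni by (simp add: beB_def cC_def cD_def)
qed

lemma BrV_flag2: assumes "(m \<le> l \<longleftrightarrow> fl) \<or> m = l"
  shows "BrV X m l = BR g (vB X m) (vB X l) (vB X 1) (vB X (Suc n)) fl"
  using assms by (auto simp: BrV_def)

lemma pq_lt: assumes x: "x \<in> kahan_dom GG" and p: "p \<in> S" and q: "q \<in> S" and ij: "fst p < fst q"
  shows "BB x (Gr x p) (Gr x q) = g * sgm (fst p) (fst q) * FF x p * FF x q"
proof -
  have D: "DD x" by (rule dom_DD[OF x])
  have i: "fst p \<in> {1..n}" using p by auto
  have j: "fst q \<in> {1..n}" using q by auto
  have m1: "1 \<in> {1..Suc n}" "fst p \<in> {1..Suc n}" "Suc (fst p) \<in> {1..Suc n}" "Suc n \<in> {1..Suc n}"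
    "fst q \<in> {1..Suc n}" "Suc (fst q) \<in> {1..Suc n}" using i j by auto
  have exp: "BB x (Gr x p) (Gr x q) = PB (bs x) (fst p) * PB (bs x) (fst q) * BB x (ep p) (ep q) + PB (bs x) (fst p) * x q * ((cA (bs x) (fst q)) * BB x (ep p) (gv 1) + (cB (bs x) (fst q)) * BB x (ep p) (gv (fst q)) + (cC (bs x) (fst q)) * BB x (ep p) (gv (Suc n)) + (cD (bs x) (fst q)) * BB x (ep p) (gv (Suc (fst q)))) + x p * PB (bs x) (fst q) * ((cA (bs x) (fst p)) * BB x (gv 1) (ep q) + (cB (bs x) (fst p)) * BB x (gv (fst p)) (ep q) + (cC (bs x) (fst p)) * BB x (gv (Suc n)) (ep q) + (cD (bs x) (fst p)) * BB x (gv (Suc (fst p))) (ep q)) + x p * x q * ((cA (bs x) (fst p)) * ((cA (bs x) (fst q)) * BB x (gv 1) (gv 1) + (cB (bs x) (fst q)) * BB x (gv 1) (gv (fst q)) + (cC (bs x) (fst q)) * BB x (gv 1) (gv (Suc n)) + (cD (bs x) (fst q)) * BB x (gv 1) (gv (Suc (fst q)))) + (cB (bs x) (fst p)) * ((cA (bs x) (fst q)) * BB x (gv (fst p)) (gv 1) + (cB (bs x) (fst q)) * BB x (gv (fst p)) (gv (fst q)) + (cC (bs x) (fst q)) * BB x (gv (fst p)) (gv (Suc n)) + (cD (bs x) (fst q)) * BB x (gv (fst p)) (gv (Suc (fst q)))) + (cC (bs x) (fst p)) * ((cA (bs x) (fst q)) * BB x (gv (Suc n)) (gv 1) + (cB (bs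 x) (fst q)) * BB x (gv (Suc n)) (gv (fst q)) + (cC (bs x) (fst q)) * BB x (gv (Suc n)) (gv (Suc n)) + (cD (bs x) (fst q)) * BB x (gv (Suc n)) (gv (Suc (fst q)))) + (cD (bs x) (fst p)) * ((cA (bs x) (fst q)) * BB x (gv (Suc (fst p))) (gv 1) + (cB (bs x) (fst q)) * BB x (gv (Suc (fst p))) (gv (fst q)) + (cC (bs x) (fst q)) * BB x (gv (Suc (fst p))) (gv (Suc n)) + (cD (bs x) (fst q)) * BB x (gv (Suc (fst p))) (gv (Suc (fst q)))))"
    unfolding Gr_alt[of x p] Gr_alt[of x q] BB_add_left BB_add_right BB_mult_left BB_mult_right 
    by (simp add: algebra_simps)
  have f0: "DeltaV (bs x) (fst p) 1 = DI g (vB (bs x) (fst p)) (vB (bs x) (Suc (fst p))) (vB (bs x) 1) (vB (bs x) 1) (vB (bs x) (Suc n)) True" by (rule DeltaV_flag) (use i j ij in auto)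
  have f1: "DeltaV (bs x) (fst p) (fst q) = DI g (vB (bs x) (fst p)) (vB (bs x) (Suc (fst p))) (vB (bs x) (fst q)) (vB (bs x) 1) (vB (bs x) (Suc n)) False" by (rule DeltaV_flag) (use i j ij in auto)
  have f2: "DeltaV (bs x) (fst p) (Suc n) = DI g (vB (bs x) (fst p)) (vB (bs x) (Suc (fst p))) (vB (bs x) (Suc n)) (vB (bs x) 1) (vB (bs x) (Suc n)) False" by (rule DeltaV_flag) (use i j ij in auto)
  have f3: "DeltaV (bs x) (fst p) (Suc (fst q)) = DI g (vB (bs x) (fst p)) (vB (bs x) (Suc (fst p))) (vB (bs x) (Suc (fst q))) (vB (bs x) 1) (vB (bs x) (Suc n)) False" by (rule DeltaV_flag) (use i j ij in auto)
  have f4: "DeltaV (bs x) (fst q) 1 = DI g (vB (bs x) (fst q)) (vB (bs x) (Suc (fst q))) (vB (bs x) 1) (vB (bs x) 1) (vB (bs x) (Suc n)) True" by (rule DeltaV_flag) (use i j ij in auto)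
  have f5: "DeltaV (bs x) (fst q) (fst p) = DI g (vB (bs x) (fst q)) (vB (bs x) (Suc (fst q))) (vB (bs x) (fst p)) (vB (bs x) 1) (vB (bs x) (Suc n)) True" by (rule DeltaV_flag) (use i j ij in auto)
  have f6: "DeltaV (bs x) (fst q) (Suc n) = DI g (vB (bs x) (fst q)) (vB (bs x) (Suc (fst q))) (vB (bs x) (Suc n)) (vB (bs x) 1) (vB (bs x) (Suc n)) False" by (rule DeltaV_flag) (use i j ij in auto)
  have f7: "DeltaV (bs x) (fst q) (Suc (fst p)) = DI g (vB (bs x) (fst q)) (vB (bs x) (Suc (fst q))) (vB (bs x) (Suc (fst p))) (vB (bs x) 1) (vB (bs x) (Suc n)) True" by (rule DeltaV_flag) (use i j ij in auto)
  have f8: "BrV (bs x) 1 1 = BR g (vB (bs x) 1) (vB (bs x) 1) (vB (bs x) 1) (vB (bs x) (Suc n)) True" by (rule BrV_flag2) (use i j ij in auto)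
  have f9: "BrV (bs x) 1 (fst q) = BR g (vB (bs x) 1) (vB (bs x) (fst q)) (vB (bs x) 1) (vB (bs x) (Suc n)) True" by (rule BrV_flag2) (use i j ij in auto)
  have f10: "BrV (bs x) 1 (Suc n) = BR g (vB (bs x) 1) (vB (bs x) (Suc n)) (vB (bs x) 1) (vB (bs x) (Suc n)) True" by (rule BrV_flag2) (use i j ij in auto)
  have f11: "BrV (bs x) 1 (Suc (fst q)) = BR g (vB (bs x) 1) (vB (bs x) (Suc (fst q))) (vB (bs x) 1) (vB (bs x) (Suc n)) True" by (rule BrV_flag2) (use i j ij in auto)
  have f12: "BrV (bs x) (fst p) 1 = BR g (vB (bs x) (fst p)) (vB (bs x) 1) (vB (bs x) 1) (vB (bs x) (Suc n)) False" by (rule BrV_flag2) (use i j ij in auto)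
  have f13: "BrV (bs x) (fst p) (fst q) = BR g (vB (bs x) (fst p)) (vB (bs x) (fst q)) (vB (bs x) 1) (vB (bs x) (Suc n)) True" by (rule BrV_flag2) (use i j ij in auto)
  have f14: "BrV (bs x) (fst p) (Suc n) = BR g (vB (bs x) (fst p)) (vB (bs x) (Suc n)) (vB (bs x) 1) (vB (bs x) (Suc n)) True" by (rule BrV_flag2) (use i j ij in auto)
  have f15: "BrV (bs x) (fst p) (Suc (fst q)) = BR g (vB (bs x) (fst p)) (vB (bs x) (Suc (fst q))) (vB (bs x) 1) (vB (bs x) (Suc n)) True" by (rule BrV_flag2) (use i j ij in auto)
  have f16: "BrV (bs x) (Suc n) 1 = BR g (vB (bs x) (Suc n)) (vB (bs x) 1) (vB (bs x) 1) (vB (bs x) (Suc n)) False" by (rule BrV_flag2) (use i j ij in auto)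
  have f17: "BrV (bs x) (Suc n) (fst q) = BR g (vB (bs x) (Suc n)) (vB (bs x) (fst q)) (vB (bs x) 1) (vB (bs x) (Suc n)) False" by (rule BrV_flag2) (use i j ij in auto)
  have f18: "BrV (bs x) (Suc n) (Suc n) = BR g (vB (bs x) (Suc n)) (vB (bs x) (Suc n)) (vB (bs x) 1) (vB (bs x) (Suc n)) True" by (rule BrV_flag2) (use i j ij in auto)
  have f19: "BrV (bs x) (Suc n) (Suc (fst q)) = BR g (vB (bs x) (Suc n)) (vB (bs x) (Suc (fst q))) (vB (bs x) 1) (vB (bs x) (Suc n)) False" by (rule BrV_flag2) (use i j ij in auto)
  have f20: "BrV (bs x) (Suc (fst p)) 1 = BR g (vB (bs x) (Suc (fst p))) (vB (bs x) 1) (vB (bs x) 1) (vB (bs x) (Suc n)) False" by (rule BrV_flag2) (use i j ij in auto)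
  have f21: "BrV (bs x) (Suc (fst p)) (fst q) = BR g (vB (bs x) (Suc (fst p))) (vB (bs x) (fst q)) (vB (bs x) 1) (vB (bs x) (Suc n)) True" by (rule BrV_flag2) (use i j ij in auto)
  have f22: "BrV (bs x) (Suc (fst p)) (Suc n) = BR g (vB (bs x) (Suc (fst p))) (vB (bs x) (Suc n)) (vB (bs x) 1) (vB (bs x) (Suc n)) True" by (rule BrV_flag2) (use i j ij in auto)
  have f23: "BrV (bs x) (Suc (fst p)) (Suc (fst q)) = BR g (vB (bs x) (Suc (fst p))) (vB (bs x) (Suc (fst q))) (vB (bs x) 1) (vB (bs x) (Suc n)) True" by (rule BrV_flag2) (use i j ij in auto)
  have ni: "fst p \<noteq> n" using ij j by auto
  have nj: "fst q \<noteq> 1" using ij i by auto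
  have PBp: "PB (bs x) (fst p) = alB (bs x) (fst p) * beB (bs x) (fst p)" by (simp add: PB_def)
  have PBq: "PB (bs x) (fst q) = alB (bs x) (fst q) * beB (bs x) (fst q)" by (simp add: PB_def)
  have E0: "PB (bs x) (fst p) * ((cA (bs x) (fst q)) * DeltaV (bs x) (fst p) 1 + (cB (bs x) (fst q)) * DeltaV (bs x) (fst p) (fst q) + (cC (bs x) (fst q)) * DeltaV (bs x) (fst p) (Suc n) + (cD (bs x) (fst q)) * DeltaV (bs x) (fst p) (Suc (fst q))) - PB (bs x) (fst q) * ((cA (bs x) (fst p)) * DeltaV (bs x) (fst q) 1 + (cB (bs x) (fst p)) * DeltaV (bs x) (fst q) (fst p) + (cC (bs x) (fst p)) * DeltaV (bs x) (fst q) (Suc n) + (cD (bs x) (fst p)) * DeltaV (bs x) (fst q) (Suc (fst p))) + ((cA (bs x) (fst p)) * ((cA (bs x) (fst q)) * BrV (bs x) 1 1 + (cB (bs x) (fst q)) * BrV (bs x) 1 (fst q) + (cC (bs x) (fst q)) * BrV (bs x) 1 (Suc n) + (cD (bs x) (fst q)) * BrV (bs x) 1 (Suc (fst q))) + (cB (bs x) (fst p)) * ((cA (bs x) (fst q)) * BrV (bs x) (fst p) 1 + (cB (bs x) (fst q)) * BrV (bs x) (fst p) (fst q) + (cC (bs x) (fst q)) * BrV (bs x) (fst p) (Suc n) + (cD (bs x) (fst q)) * BrV (bs x) (fst p) (Suc (fst q))) + (cC (bs x) (fst p)) * ((cA (bs x) (fst q)) * BrV (bs x) (Suc n) 1 +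 (cB (bs x) (fst q)) * BrV (bs x) (Suc n) (fst q) + (cC (bs x) (fst q)) * BrV (bs x) (Suc n) (Suc n) + (cD (bs x) (fst q)) * BrV (bs x) (Suc n) (Suc (fst q))) + (cD (bs x) (fst p)) * ((cA (bs x) (fst q)) * BrV (bs x) (Suc (fst p)) 1 + (cB (bs x) (fst q)) * BrV (bs x) (Suc (fst p)) (fst q) + (cC (bs x) (fst q)) * BrV (bs x) (Suc (fst p)) (Suc n) + (cD (bs x) (fst q)) * BrV (bs x) (Suc (fst p)) (Suc (fst q)))) = 0"
    by (rule final_lt[OF f0 f1 f2 f3 f4 f5 f6 f7 f8 f9 f10 f11 f12 f13 f14 f15 f16 f17 f18 f19 f20 f21 f22 f23 hypA[OF D i] hypB'[OF D i ni] hypA'[OF D j nj] hypB[OF D j] PBp PBq])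
  have FFp: "FF x p = x p * PB (bs x) (fst p)" "FF x q = x q * PB (bs x) (fst q)" using p q by (simp_all add: FF_def)
  have "BB x (Gr x p) (Gr x q) = g * sgm (fst p) (fst q) * FF x p * FF x q + x p * x q * (PB (bs x) (fst p) * ((cA (bs x) (fst q)) * DeltaV (bs x) (fst p) 1 + (cB (bs x) (fst q)) * DeltaV (bs x) (fst p) (fst q) + (cC (bs x) (fst q)) * DeltaV (bs x) (fst p) (Suc n) + (cD (bs x) (fst q)) * DeltaV (bs x) (fst p) (Suc (fst q))) - PB (bs x) (fst q) * ((cA (bs x) (fst p)) * DeltaV (bs x) (fst q) 1 + (cB (bs x) (fst p)) * DeltaV (bs x) (fst q) (fst p) + (cC (bs x) (fst p)) * DeltaV (bs x) (fst q) (Suc n) + (cD (bs x) (fst p)) * DeltaV (bs x) (fst q) (Suc (fst p))) + ((cA (bs x) (fst p)) * ((cA (bs x) (fst q)) * BrV (bs x) 1 1 + (cB (bs x) (fst q)) * BrV (bs x) 1 (fst q) + (cC (bs x) (fst q)) * BrV (bs x) 1 (Suc n) + (cD (bs x) (fst q)) * BrV (bs x) 1 (Suc (fst q))) + (cB (bs x) (fst p)) * ((cA (bs x) (fst q)) * BrV (bs x) (fst p) 1 + (cB (bs x) (fst q)) * BrV (bs x) (fst p) (fst q) + (cC (bs x) (fst q)) * BrV (bs x) (fst p) (Suc n) + (cD (bs x) (fst q)) * BrV (bs x) (fst p) (Suc (fst q))) + (cC (bs x) (fst p)) * ((cA (bs x) (fst q)) * BrV (bs x) (Suc n) 1 + (cB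 (bs x) (fst q)) * BrV (bs x) (Suc n) (fst q) + (cC (bs x) (fst q)) * BrV (bs x) (Suc n) (Suc n) + (cD (bs x) (fst q)) * BrV (bs x) (Suc n) (Suc (fst q))) + (cD (bs x) (fst p)) * ((cA (bs x) (fst q)) * BrV (bs x) (Suc (fst p)) 1 + (cB (bs x) (fst q)) * BrV (bs x) (Suc (fst p)) (fst q) + (cC (bs x) (fst q)) * BrV (bs x) (Suc (fst p)) (Suc n) + (cD (bs x) (fst q)) * BrV (bs x) (Suc (fst p)) (Suc (fst q)))))"
    unfolding exp FFp BB_ep_ep[OF p q] BB_ep_gv[OF p m1(1)] BB_ep_gv[OF p m1(2)] BB_ep_gv[OF p m1(3)] BB_ep_gv[OF p m1(4)]
      BB_ep_gv[OF p m1(5)] BB_ep_gv[OF p m1(6)]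
      BB_gv_ep[OF q m1(1)] BB_gv_ep[OF q m1(2)] BB_gv_ep[OF q m1(3)] BB_gv_ep[OF q m1(4)] BB_gv_ep[OF q m1(5)] BB_gv_ep[OF q m1(6)]
      BB_gv_gv[OF m1(1) m1(1)] BB_gv_gv[OF m1(1) m1(2)] BB_gv_gv[OF m1(1) m1(3)] BB_gv_gv[OF m1(1) m1(4)] BB_gv_gv[OF m1(1) m1(5)] BB_gv_gv[OF m1(1) m1(6)] BB_gv_gv[OF m1(2) m1(1)] BB_gv_gv[OF m1(2) m1(2)] BB_gv_gv[OF m1(2) m1(3)] BB_gv_gv[OF m1(2) m1(4)] BB_gv_gv[OF m1(2) m1(5)] BB_gv_gv[OF m1(2) m1(6)] BB_gv_gv[OF m1(3) m1(1)] BB_gv_gv[OF m1(3) m1(2)] BB_gv_gv[OF m1(3) m1(3)] BB_gv_gv[OF m1(3) m1(4)] BB_gv_gv[OF m1(3) m1(5)] BB_gv_gv[OF m1(3) m1(6)] BB_gv_gv[OF m1(4) m1(1)] BB_gv_gv[OF m1(4) m1(2)] BB_gv_gv[OF m1(4) m1(3)] BB_gv_gv[OF m1(4) m1(4)] BB_gv_gv[OF m1(4) m1(5)] BB_gv_gv[OF m1(4) m1(6)] BB_gv_gv[OF m1(5) m1(1)] BB_gv_gv[OF m1(5) m1(2)] BB_gv_gv[OF m1(5) m1(3)] BB_gv_gv[OF m1(5) m1(4)] BB_gv_gv[OF m1(5) m1(5)] BB_gv_gv[OF m1(5) m1(6)] BB_gv_gv[OF m1(6) m1(1)] BB_gv_gv[OF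 m1(6) m1(2)] BB_gv_gv[OF m1(6) m1(3)] BB_gv_gv[OF m1(6) m1(4)] BB_gv_gv[OF m1(6) m1(5)] BB_gv_gv[OF m1(6) m1(6)] 
    by (simp add: algebra_simps)
  then show ?thesis using E0 by simp
qed

lemma pq_eq: assumes x: "x \<in> kahan_dom GG" and p: "p \<in> S" and q: "q \<in> S" and ij: "fst q = fst p"
  shows "BB x (Gr x p) (Gr x q) = g * sgm (fst p) (fst q) * FF x p * FF x q"
proof -
  have D: "DD x" by (rule dom_DD[OF x])
  have i: "fst p \<in> {1..n}" using p by auto
  have j: "fst q \<in> {1..n}" using q by auto
  have m1: "1 \<in> {1..Suc n}" "fst p \<in> {1..Suc n}" "Suc (fst p) \<in> {1..Suc n}" "Suc n \<in> {1..Suc n}"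
    "fst q \<in> {1..Suc n}" "Suc (fst q) \<in> {1..Suc n}" using i j by auto
  have exp: "BB x (Gr x p) (Gr x q) = PB (bs x) (fst p) * PB (bs x) (fst p) * BB x (ep p) (ep q) + PB (bs x) (fst p) * x q * ((cA (bs x) (fst p)) * BB x (ep p) (gv 1) + (cB (bs x) (fst p)) * BB x (ep p) (gv (fst p)) + (cC (bs x) (fst p)) * BB x (ep p) (gv (Suc n)) + (cD (bs x) (fst p)) * BB x (ep p) (gv (Suc (fst p)))) + x p * PB (bs x) (fst p) * ((cA (bs x) (fst p)) * BB x (gv 1) (ep q) + (cB (bs x) (fst p)) * BB x (gv (fst p)) (ep q) + (cC (bs x) (fst p)) * BB x (gv (Suc n)) (ep q) + (cD (bs x) (fst p)) * BB x (gv (Suc (fst p))) (ep q)) + x p * x q * ((cA (bs x) (fst p)) * ((cA (bs x) (fst p)) * BB x (gv 1) (gv 1) + (cB (bs x) (fst p)) * BB x (gv 1) (gv (fst p)) + (cC (bs x) (fst p)) * BB x (gv 1) (gv (Suc n)) + (cD (bs x) (fst p)) * BB x (gv 1) (gv (Suc (fst p)))) + (cB (bs x) (fst p)) * ((cA (bs x) (fst p)) * BB x (gv (fst p)) (gv 1) + (cB (bs x) (fst p)) * BB x (gv (fst p)) (gv (fst p)) + (cC (bs x) (fst p)) * BB x (gv (fst p)) (gv (Suc n)) + (cD (bs x) (fst p)) * BB x (gv (fst p)) (gv (Suc (fst p)))) + (cC (bs x) (fst p)) * ((cA (bs x) (fst p)) * BB x (gv (Suc n)) (gv 1) + (cB (bs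 x) (fst p)) * BB x (gv (Suc n)) (gv (fst p)) + (cC (bs x) (fst p)) * BB x (gv (Suc n)) (gv (Suc n)) + (cD (bs x) (fst p)) * BB x (gv (Suc n)) (gv (Suc (fst p)))) + (cD (bs x) (fst p)) * ((cA (bs x) (fst p)) * BB x (gv (Suc (fst p))) (gv 1) + (cB (bs x) (fst p)) * BB x (gv (Suc (fst p))) (gv (fst p)) + (cC (bs x) (fst p)) * BB x (gv (Suc (fst p))) (gv (Suc n)) + (cD (bs x) (fst p)) * BB x (gv (Suc (fst p))) (gv (Suc (fst p)))))"
    unfolding Gr_alt[of x p] Gr_alt[of x q] BB_add_left BB_add_right BB_mult_left BB_mult_right ij
    by (simp add: algebra_simps)
  have f0: "DeltaV (bs x) (fst p) 1 = DI g (vB (bs x) (fst p)) (vB (bs x) (Suc (fst p))) (vB (bs x) 1) (vB (bs x) 1) (vB (bs x) (Suc n)) True" by (rule DeltaV_flag) (use i j ij in auto)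
  have f1: "DeltaV (bs x) (fst p) (fst p) = DI g (vB (bs x) (fst p)) (vB (bs x) (Suc (fst p))) (vB (bs x) (fst p)) (vB (bs x) 1) (vB (bs x) (Suc n)) True" by (rule DeltaV_flag) (use i j ij in auto)
  have f2: "DeltaV (bs x) (fst p) (Suc n) = DI g (vB (bs x) (fst p)) (vB (bs x) (Suc (fst p))) (vB (bs x) (Suc n)) (vB (bs x) 1) (vB (bs x) (Suc n)) False" by (rule DeltaV_flag) (use i j ij in auto)
  have f3: "DeltaV (bs x) (fst p) (Suc (fst p)) = DI g (vB (bs x) (fst p)) (vB (bs x) (Suc (fst p))) (vB (bs x) (Suc (fst p))) (vB (bs x) 1) (vB (bs x) (Suc n)) False" by (rule DeltaV_flag) (use i j ij in auto)
  have f4: "DeltaV (bs x) (fst p) 1 = DI g (vB (bs x) (fst p)) (vB (bs x) (Suc (fst p))) (vB (bs x) 1) (vB (bs x) 1) (vB (bs x) (Suc n)) True" by (rule DeltaV_flag) (use i j ij in auto)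
  have f5: "DeltaV (bs x) (fst p) (fst p) = DI g (vB (bs x) (fst p)) (vB (bs x) (Suc (fst p))) (vB (bs x) (fst p)) (vB (bs x) 1) (vB (bs x) (Suc n)) True" by (rule DeltaV_flag) (use i j ij in auto)
  have f6: "DeltaV (bs x) (fst p) (Suc n) = DI g (vB (bs x) (fst p)) (vB (bs x) (Suc (fst p))) (vB (bs x) (Suc n)) (vB (bs x) 1) (vB (bs x) (Suc n)) False" by (rule DeltaV_flag) (use i j ij in auto)
  have f7: "DeltaV (bs x) (fst p) (Suc (fst p)) = DI g (vB (bs x) (fst p)) (vB (bs x) (Suc (fst p))) (vB (bs x) (Suc (fst p))) (vB (bs x) 1) (vB (bs x) (Suc n)) False" by (rule DeltaV_flag) (use i j ij in auto)
  have f8: "BrV (bs x) 1 1 = BR g (vB (bs x) 1) (vB (bs x) 1) (vB (bs x) 1) (vB (bs x) (Suc n)) True" by (rule BrV_flag2) (use i j ij in auto)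
  have f9: "BrV (bs x) 1 (fst p) = BR g (vB (bs x) 1) (vB (bs x) (fst p)) (vB (bs x) 1) (vB (bs x) (Suc n)) True" by (rule BrV_flag2) (use i j ij in auto)
  have f10: "BrV (bs x) 1 (Suc n) = BR g (vB (bs x) 1) (vB (bs x) (Suc n)) (vB (bs x) 1) (vB (bs x) (Suc n)) True" by (rule BrV_flag2) (use i j ij in auto)
  have f11: "BrV (bs x) 1 (Suc (fst p)) = BR g (vB (bs x) 1) (vB (bs x) (Suc (fst p))) (vB (bs x) 1) (vB (bs x) (Suc n)) True" by (rule BrV_flag2) (use i j ij in auto)
  have f12: "BrV (bs x) (fst p) 1 = BR g (vB (bs x) (fst p)) (vB (bs x) 1) (vB (bs x) 1) (vB (bs x) (Suc n)) False" by (rule BrV_flag2) (use i j ij in auto)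
  have f13: "BrV (bs x) (fst p) (fst p) = BR g (vB (bs x) (fst p)) (vB (bs x) (fst p)) (vB (bs x) 1) (vB (bs x) (Suc n)) True" by (rule BrV_flag2) (use i j ij in auto)
  have f14: "BrV (bs x) (fst p) (Suc n) = BR g (vB (bs x) (fst p)) (vB (bs x) (Suc n)) (vB (bs x) 1) (vB (bs x) (Suc n)) True" by (rule BrV_flag2) (use i j ij in auto)
  have f15: "BrV (bs x) (fst p) (Suc (fst p)) = BR g (vB (bs x) (fst p)) (vB (bs x) (Suc (fst p))) (vB (bs x) 1) (vB (bs x) (Suc n)) True" by (rule BrV_flag2) (use i j ij in auto)
  have f16: "BrV (bs x) (Suc n) 1 = BR g (vB (bs x) (Suc n)) (vB (bs x) 1) (vB (bs x) 1) (vB (bs x) (Suc n)) False" by (rule BrV_flag2) (use i j ij in auto)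
  have f17: "BrV (bs x) (Suc n) (fst p) = BR g (vB (bs x) (Suc n)) (vB (bs x) (fst p)) (vB (bs x) 1) (vB (bs x) (Suc n)) False" by (rule BrV_flag2) (use i j ij in auto)
  have f18: "BrV (bs x) (Suc n) (Suc n) = BR g (vB (bs x) (Suc n)) (vB (bs x) (Suc n)) (vB (bs x) 1) (vB (bs x) (Suc n)) True" by (rule BrV_flag2) (use i j ij in auto)
  have f19: "BrV (bs x) (Suc n) (Suc (fst p)) = BR g (vB (bs x) (Suc n)) (vB (bs x) (Suc (fst p))) (vB (bs x) 1) (vB (bs x) (Suc n)) False" by (rule BrV_flag2) (use i j ij in auto)
  have f20: "BrV (bs x) (Suc (fst p)) 1 = BR g (vB (bs x) (Suc (fst p))) (vB (bs x) 1) (vB (bs x) 1) (vB (bs x) (Suc n)) False" by (rule BrV_flag2) (use i j ij in auto)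
  have f21: "BrV (bs x) (Suc (fst p)) (fst p) = BR g (vB (bs x) (Suc (fst p))) (vB (bs x) (fst p)) (vB (bs x) 1) (vB (bs x) (Suc n)) False" by (rule BrV_flag2) (use i j ij in auto)
  have f22: "BrV (bs x) (Suc (fst p)) (Suc n) = BR g (vB (bs x) (Suc (fst p))) (vB (bs x) (Suc n)) (vB (bs x) 1) (vB (bs x) (Suc n)) True" by (rule BrV_flag2) (use i j ij in auto)
  have f23: "BrV (bs x) (Suc (fst p)) (Suc (fst p)) = BR g (vB (bs x) (Suc (fst p))) (vB (bs x) (Suc (fst p))) (vB (bs x) 1) (vB (bs x) (Suc n)) True" by (rule BrV_flag2) (use i j ij in auto)

  have PBp: "PB (bs x) (fst p) = alB (bs x) (fst p) * beB (bs x) (fst p)" by (simp add: PB_def)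
  have PBq: "PB (bs x) (fst q) = alB (bs x) (fst q) * beB (bs x) (fst q)" by (simp add: PB_def)
  have E0: "PB (bs x) (fst p) * ((cA (bs x) (fst p)) * DeltaV (bs x) (fst p) 1 + (cB (bs x) (fst p)) * DeltaV (bs x) (fst p) (fst p) + (cC (bs x) (fst p)) * DeltaV (bs x) (fst p) (Suc n) + (cD (bs x) (fst p)) * DeltaV (bs x) (fst p) (Suc (fst p))) - PB (bs x) (fst p) * ((cA (bs x) (fst p)) * DeltaV (bs x) (fst p) 1 + (cB (bs x) (fst p)) * DeltaV (bs x) (fst p) (fst p) + (cC (bs x) (fst p)) * DeltaV (bs x) (fst p) (Suc n) + (cD (bs x) (fst p)) * DeltaV (bs x) (fst p) (Suc (fst p))) + ((cA (bs x) (fst p)) * ((cA (bs x) (fst p)) * BrV (bs x) 1 1 + (cB (bs x) (fst p)) * BrV (bs x) 1 (fst p) + (cC (bs x) (fst p)) * BrV (bs x) 1 (Suc n) + (cD (bs x) (fst p)) * BrV (bs x) 1 (Suc (fst p))) + (cB (bs x) (fst p)) * ((cA (bs x) (fst p)) * BrV (bs x) (fst p) 1 + (cB (bs x) (fst p)) * BrV (bs x) (fst p) (fst p) + (cC (bs x) (fst p)) * BrV (bs x) (fst p) (Suc n) + (cD (bs x) (fst p)) * BrV (bs x) (fst p) (Suc (fst p))) + (cC (bs x) (fst p)) * ((cA (bs x) (fst p)) * BrV (bs x) (Suc n) 1 + (cB (bs x) (fst p)) * BrV (bs x) (Suc n) (fst p) + (cC (bs x) (fst p)) * BrV (bs x)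 (Suc n) (Suc n) + (cD (bs x) (fst p)) * BrV (bs x) (Suc n) (Suc (fst p))) + (cD (bs x) (fst p)) * ((cA (bs x) (fst p)) * BrV (bs x) (Suc (fst p)) 1 + (cB (bs x) (fst p)) * BrV (bs x) (Suc (fst p)) (fst p) + (cC (bs x) (fst p)) * BrV (bs x) (Suc (fst p)) (Suc n) + (cD (bs x) (fst p)) * BrV (bs x) (Suc (fst p)) (Suc (fst p)))) = 0"
    by (rule final_eq[OF f0 f1 f2 f3 f4 f5 f6 f7 f8 f9 f10 f11 f12 f13 f14 f15 f16 f17 f18 f19 f20 f21 f22 f23 hypA[OF D i] hypB[OF D i] PBp])
  have FFp: "FF x p = x p * PB (bs x) (fst p)" "FF x q = x q * PB (bs x) (fst q)" using p q by (simp_all add: FF_def)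
  have "BB x (Gr x p) (Gr x q) = g * sgm (fst p) (fst q) * FF x p * FF x q + x p * x q * (PB (bs x) (fst p) * ((cA (bs x) (fst p)) * DeltaV (bs x) (fst p) 1 + (cB (bs x) (fst p)) * DeltaV (bs x) (fst p) (fst p) + (cC (bs x) (fst p)) * DeltaV (bs x) (fst p) (Suc n) + (cD (bs x) (fst p)) * DeltaV (bs x) (fst p) (Suc (fst p))) - PB (bs x) (fst p) * ((cA (bs x) (fst p)) * DeltaV (bs x) (fst p) 1 + (cB (bs x) (fst p)) * DeltaV (bs x) (fst p) (fst p) + (cC (bs x) (fst p)) * DeltaV (bs x) (fst p) (Suc n) + (cD (bs x) (fst p)) * DeltaV (bs x) (fst p) (Suc (fst p))) + ((cA (bs x) (fst p)) * ((cA (bs x) (fst p)) * BrV (bs x) 1 1 + (cB (bs x) (fst p)) * BrV (bs x) 1 (fst p) + (cC (bs x) (fst p)) * BrV (bs x) 1 (Suc n) + (cD (bs x) (fst p)) * BrV (bs x) 1 (Suc (fst p))) + (cB (bs x) (fst p)) * ((cA (bs x) (fst p)) * BrV (bs x) (fst p) 1 + (cB (bs x) (fst p)) * BrV (bs x) (fst p) (fst p) + (cC (bs x) (fst p)) * BrV (bs x) (fst p) (Suc n) + (cD (bs x) (fst p)) * BrV (bs x) (fst p) (Suc (fst p))) + (cC (bs x) (fst p)) * ((cA (bs x) (fst p)) * BrV (bs x) (Suc n) 1 + (cB (bs x) (fst p)) * BrV (bs x) (Suc n) (fst p) + (cC (bs x) (fst p)) * BrV (bs x) (Suc n) (Suc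 n) + (cD (bs x) (fst p)) * BrV (bs x) (Suc n) (Suc (fst p))) + (cD (bs x) (fst p)) * ((cA (bs x) (fst p)) * BrV (bs x) (Suc (fst p)) 1 + (cB (bs x) (fst p)) * BrV (bs x) (Suc (fst p)) (fst p) + (cC (bs x) (fst p)) * BrV (bs x) (Suc (fst p)) (Suc n) + (cD (bs x) (fst p)) * BrV (bs x) (Suc (fst p)) (Suc (fst p)))))"
    unfolding exp FFp BB_ep_ep[OF p q] BB_ep_gv[OF p m1(1)] BB_ep_gv[OF p m1(2)] BB_ep_gv[OF p m1(3)] BB_ep_gv[OF p m1(4)]
      BB_ep_gv[OF p m1(5)] BB_ep_gv[OF p m1(6)]
      BB_gv_ep[OF q m1(1)] BB_gv_ep[OF q m1(2)] BB_gv_ep[OF q m1(3)] BB_gv_ep[OF q m1(4)] BB_gv_ep[OF q m1(5)] BB_gv_ep[OF q m1(6)]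
      BB_gv_gv[OF m1(1) m1(1)] BB_gv_gv[OF m1(1) m1(2)] BB_gv_gv[OF m1(1) m1(3)] BB_gv_gv[OF m1(1) m1(4)] BB_gv_gv[OF m1(1) m1(5)] BB_gv_gv[OF m1(1) m1(6)] BB_gv_gv[OF m1(2) m1(1)] BB_gv_gv[OF m1(2) m1(2)] BB_gv_gv[OF m1(2) m1(3)] BB_gv_gv[OF m1(2) m1(4)] BB_gv_gv[OF m1(2) m1(5)] BB_gv_gv[OF m1(2) m1(6)] BB_gv_gv[OF m1(3) m1(1)] BB_gv_gv[OF m1(3) m1(2)] BB_gv_gv[OF m1(3) m1(3)] BB_gv_gv[OF m1(3) m1(4)] BB_gv_gv[OF m1(3) m1(5)] BB_gv_gv[OF m1(3) m1(6)] BB_gv_gv[OF m1(4) m1(1)] BB_gv_gv[OF m1(4) m1(2)] BB_gv_gv[OF m1(4) m1(3)] BB_gv_gv[OF m1(4) m1(4)] BB_gv_gv[OF m1(4) m1(5)] BB_gv_gv[OF m1(4) m1(6)] BB_gv_gv[OF m1(5) m1(1)] BB_gv_gv[OF m1(5) m1(2)] BB_gv_gv[OF m1(5) m1(3)] BB_gv_gv[OF m1(5) m1(4)] BB_gv_gv[OF m1(5) m1(5)] BB_gv_gv[OF m1(5) m1(6)] BB_gv_gv[OF m1(6) m1(1)] BB_gv_gv[OF m1(6) m1(2)] BB_gv_gv[OF m1(6) m1(3)] BB_gv_gv[OF m1(6) m1(4)] BB_gv_gv[OF m1(6) m1(5)] BB_gv_gv[OF m1(6) m1(6)] ij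
    by (simp add: algebra_simps)
  then show ?thesis using E0 by simp
qed

end

context KP begin

lemma poisson_eq_BB: assumes x: "x \<in> kahan_dom GG" and p: "p \<in> S" and q: "q \<in> S"
  shows "poisson GG (\<lambda>z. kahan GG z p) (\<lambda>z. kahan GG z q) x = BB x (Gr x p) (Gr x q)"
  unfolding poisson_def BB_def GG_fst
  by (intro sum.cong refl) (simp add: GG_snd pd_kahan[OF x _ p] pd_kahan[OF x _ q])

lemma pq_all: assumes x: "x \<in> kahan_dom GG" and p: "p \<in> S" and q: "q \<in> S"
  shows "BB x (Gr x p) (Gr x q) = g * sgm (fst p) (fst q) * FF x p * FF x q"
proof -
  consider "fst p < fst q" | "fst q = fst p" | "fst q < fst p" by linarith
  then show ?thesis
  proof cases
    case 1 then show ?thesis by (rule pq_lt[OF x p q])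
  next
    case 2 then show ?thesis by (rule pq_eq[OF x p q])
  next
    case 3
    have "BB x (Gr x p) (Gr x q) = - BB x (Gr x q) (Gr x p)" by (rule BB_skew)
    also have "\<dots> = - (g * sgm (fst q) (fst p) * FF x q * FF x p)" using pq_lt[OF x q p 3] by simp
    also have "\<dots> = g * sgm (fst p) (fst q) * FF x p * FF x q" by (simp add: sgm_swap[of "fst q" "fst p"])
    finally show ?thesis .
  qed
qed

lemma main: "kahan_poisson GG"
  unfolding kahan_poisson_def
proof (intro ballI)
  fix x i j assume x: "x \<in> kahan_dom GG" and i: "i \<in> fst GG" and j: "j \<in> fst GG"
  have i': "i \<in> S" and j': "j \<in> S" using i j by (simp_all add: GG_fst)
  show "poisson GG (\<lambda>z. kahan GG z i) (\<lambda>z. kahan GG z j) x = snd GG i j * kahan GG x i * kahan GG x j"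
    unfolding poisson_eq_BB[OF x i' j'] pq_all[OF x i' j'] GG_snd kahan_dom_FF(1)[OF x] ..
qed

end

theorem corollary2p4:
  fixes n :: nat and w :: "nat \<Rightarrow> nat" and \<gamma> :: "'a::real_normed_field"
  assumes "n \<ge> 1"
    and "weight_vector (Gamma_graph n :: (nat, 'a) sgraph) w"
    and "\<gamma> \<noteq> 0"
  shows "kahan_poisson (scale_graph \<gamma> (clone (Gamma_graph n) w))"
proof -
  interpret KP n w \<gamma>
    by unfold_locales (use assms in \<open>auto simp: weight_vector_def Gamma_graph_def\<close>)
  show ?thesis by (rule main)
qed

end
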